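(* Let $(X_0,d_0),(X_1,d_1),(X_2,d_2),\dots,(X_q,d_q)$ be $C^\infty$ vector fields on a neighborhood $\Omega$ of $0$ in $\mathbb{R}^n$, each paired with a degree in $[0,\infty)^\nu\setminus\{0\}$. Suppose $(\mathbf X,\mathbf d)=\{(X_2,d_2),\dots,(X_q,d_q)\}$ controls every element of $\{([X_i,X_j],d_i+d_j):2\le i,j\le q\}$. If $(\mathbf X,\mathbf d)$ controls $(X_0,d_0)$ and $(X_1,d_1)$, then $(\mathbf X,\mathbf d)$ also controls $([X_0,X_1],d_0+d_1)$.
   Context: For $\delta\in[0,\infty)^\nu$, $\delta^d=\prod_\mu\delta_\mu^{d^\mu}$ ($0^0=1$). $B_{(\mathbf X,\mathbf d)}(x,\delta)$ is the set of $y\in\Omega$ reachable from $x$ by an absolutely continuous $\gamma:[0,1]\to\Omega$ with $\gamma'=\sum_la_l\delta^{d_l}X_l(\gamma)$ a.e. and $\|\sum|a_l|^2\|_{L^\infty}<1$ (subspace topology); $(\mathbf X,\mathbf d)$ satisfies $\mathcal C(x,\delta,\Omega)$ if every such ODE from $x$ has an absolutely continuous solution $[0,1]\to\Omega$. $\vec\xi=(\xi,\dots,\xi)$. $(\delta\mathbf X)^\beta$ composes the operators $\delta^{d_{\beta_i}}X_{\beta_i}$ along an ordered list $\beta$; $\|f\|_{C(V)}=\sup_V|f|$ with continuity. $(\mathbf X,\mathbf d)$ controls $(Z,d)$ if there are a neighborhood $U\subseteq\Omega$ of $0$ and $\xi_1>0$ with $\mathcal C(x,\vec{\xi_1},\Omega)$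 for all $x\in U$, and for all $x\in U,\delta\in[0,1]^\nu$: $\delta^{d}Z=\sum_lc_l^{x,\delta}\delta^{d_l}X_l$ on $B_{(\mathbf X,\mathbf d)}(x,\xi_1\delta)$ with $\sup_{x\in U,\delta\in[0,1]^\nu}\sum_{|\beta|\le m}\|(\delta\mathbf X)^\beta c_l^{x,\delta}\|_{C(B_{(\mathbf X,\mathbf d)}(x,\xi_1\delta))}<\infty$ for every $m$. *)

theory Defs
  imports "HOL-Analysis.Analysis"
begin

text \<open>Multi-index power with the convention 0^0 = 1.\<close>
definition dpow :: "real^'v \<Rightarrow> real^'v \<Rightarrow> real" where
  "dpow \<delta> e = (\<Prod>\<mu>\<in>UNIV. if e $ \<mu> = 0 then 1 else (\<delta> $ \<mu>) powr (e $ \<mu>))"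

coinductive smooth_on :: "'a::real_normed_vector set \<Rightarrow> ('a \<Rightarrow> 'b::real_normed_vector) \<Rightarrow> bool"
  for S where
  "continuous_on S f \<Longrightarrow> (\<forall>x\<in>S. (f has_derivative f' x) (at x))
     \<Longrightarrow> (\<forall>v. smooth_on S (\<lambda>x. f' x v)) \<Longrightarrow> smooth_on S f"

definition lie_bracket :: "('a::real_normed_vector \<Rightarrow> 'a) \<Rightarrow> ('a \<Rightarrow> 'a) \<Rightarrow> 'a \<Rightarrow> 'a" where
  "lie_bracket X Y x = frechet_derivative Y (at x) (X x) - frechet_derivative X (at x) (Y x)"

definition abs_cont_on :: "real \<Rightarrow> real \<Rightarrow> (real \<Rightarrow> 'a::real_normed_vector) \<Rightarrow> bool" where
  "abs_cont_on a b f \<longleftrightarrow>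
     (\<forall>\<epsilon>>0. \<exists>\<eta>>0. \<forall>(n::nat) (u::nat \<Rightarrow> real) v.
        (\<forall>k<n. a \<le> u k \<and> u k \<le> v k \<and> v k \<le> b) \<and>
        (\<forall>k<n. \<forall>j<n. k \<noteq> j \<longrightarrow> v k \<le> u j \<or> v j \<le> u k) \<and>
        (\<Sum>k<n. v k - u k) < \<eta>
        \<longrightarrow> (\<Sum>k<n. norm (f (v k) - f (u k))) < \<epsilon>)"

definition admissible_coeffs :: "nat set \<Rightarrow> (nat \<Rightarrow> real \<Rightarrow> real) \<Rightarrow> bool" where
  "admissible_coeffs L a \<longleftrightarrow> (\<forall>l\<in>L. a l \<in> borel_measurable lebesgue) \<and>
     (\<exists>s<1. AE t in lebesgue. t \<in> {0..1} \<longrightarrow> (\<Sum>l\<in>L. \<bar>a l t\<bar>^2) \<le> s)"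

definition ode_solution ::
  "'a::euclidean_space set \<Rightarrow> nat set \<Rightarrow> (nat \<Rightarrow> 'a \<Rightarrow> 'a) \<Rightarrow> (nat \<Rightarrow> real^'v) \<Rightarrow> 'a \<Rightarrow> real^'v
    \<Rightarrow> (nat \<Rightarrow> real \<Rightarrow> real) \<Rightarrow> (real \<Rightarrow> 'a) \<Rightarrow> bool" where
  "ode_solution \<Omega> L X d x \<delta> a \<gamma> \<longleftrightarrow> \<gamma> 0 = x \<and> \<gamma> ` {0..1} \<subseteq> \<Omega> \<and> abs_cont_on 0 1 \<gamma> \<and>
     (AE t in lebesgue. t \<in> {0..1} \<longrightarrow>
        (\<gamma> has_vector_derivative (\<Sum>l\<in>L. (a l t * dpow \<delta> (d l)) *\<^sub>R X l (\<gamma> t))) (at t within {0..1}))"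

definition cc_ball ::
  "'a::euclidean_space set \<Rightarrow> nat set \<Rightarrow> (nat \<Rightarrow> 'a \<Rightarrow> 'a) \<Rightarrow> (nat \<Rightarrow> real^'v) \<Rightarrow> 'a \<Rightarrow> real^'v \<Rightarrow> 'a set" where
  "cc_ball \<Omega> L X d x \<delta> = {y \<in> \<Omega>. \<exists>a \<gamma>. admissible_coeffs L a \<and> ode_solution \<Omega> L X d x \<delta> a \<gamma> \<and> \<gamma> 1 = y}"

definition cond_C ::
  "'a::euclidean_space set \<Rightarrow> nat set \<Rightarrow> (nat \<Rightarrow> 'a \<Rightarrow> 'a) \<Rightarrow> (nat \<Rightarrow> real^'v) \<Rightarrow> 'a \<Rightarrow> real^'v \<Rightarrow> bool" where
  "cond_C \<Omega> L X d x \<delta> \<longleftrightarrow> (\<forall>a. admissible_coeffs L a \<longrightarrow> (\<exists>\<gamma>. ode_solution \<Omega> L X d x \<delta> a \<gamma>))"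

definition lie_deriv_on :: "'a::real_normed_vector set \<Rightarrow> ('a \<Rightarrow> 'a) \<Rightarrow> ('a \<Rightarrow> real) \<Rightarrow> ('a \<Rightarrow> real) \<Rightarrow> bool" where
  "lie_deriv_on V Y g h \<longleftrightarrow> (\<forall>y\<in>V. \<forall>\<gamma> e. e > 0 \<and> \<gamma> 0 = y \<and>
      (\<forall>t\<in>{-e..e}. \<gamma> t \<in> V \<and> (\<gamma> has_vector_derivative Y (\<gamma> t)) (at t within {-e..e}))
      \<longrightarrow> ((g \<circ> \<gamma>) has_real_derivative h y) (at 0 within {-e..e}))"

definition vf_derivs ::
  "'a::real_normed_vector set \<Rightarrow> nat set \<Rightarrow> (nat \<Rightarrow> 'a \<Rightarrow> 'a) \<Rightarrow> ('a \<Rightarrow> real) \<Rightarrow> (nat list \<Rightarrow> 'a \<Rightarrow> real) \<Rightarrow> nat \<Rightarrow> bool" where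
  "vf_derivs V L Y g D m \<longleftrightarrow> (\<forall>y\<in>V. D [] y = g y) \<and>
     (\<forall>\<beta> l. set \<beta> \<subseteq> L \<and> l \<in> L \<and> length \<beta> < m \<longrightarrow> lie_deriv_on V (Y l) (D \<beta>) (D (l # \<beta>))) \<and>
     (\<forall>\<beta>. set \<beta> \<subseteq> L \<and> length \<beta> \<le> m \<longrightarrow> continuous_on V (D \<beta>))"

definition controls ::
  "'a::euclidean_space set \<Rightarrow> nat set \<Rightarrow> (nat \<Rightarrow> 'a \<Rightarrow> 'a) \<Rightarrow> (nat \<Rightarrow> real^'v) \<Rightarrow> ('a \<Rightarrow> 'a) \<Rightarrow> real^'v \<Rightarrow> bool" where
  "controls \<Omega> L X d Z dZ \<longleftrightarrow>
     (\<exists>U \<xi>1. open U \<and> 0 \<in> U \<and> U \<subseteq> \<Omega> \<and> \<xi>1 > 0 \<and>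
        (\<forall>x\<in>U. cond_C \<Omega> L X d x (\<chi> \<mu>. \<xi>1)) \<and>
        (\<exists>c :: 'a \<Rightarrow> real^'v \<Rightarrow> nat \<Rightarrow> 'a \<Rightarrow> real.
          (\<forall>x\<in>U. \<forall>\<delta>. (\<forall>\<mu>. 0 \<le> \<delta> $ \<mu> \<and> \<delta> $ \<mu> \<le> 1) \<longrightarrow>
             (\<forall>y\<in>cc_ball \<Omega> L X d x (\<xi>1 *\<^sub>R \<delta>).
                dpow \<delta> dZ *\<^sub>R Z y = (\<Sum>l\<in>L. (c x \<delta> l y * dpow \<delta> (d l)) *\<^sub>R X l y))) \<and>
          (\<forall>m. \<forall>l\<in>L. \<exists>C::real. \<forall>x\<in>U. \<forall>\<delta>. (\<forall>\<mu>. 0 \<le> \<delta> $ \<mu> \<and> \<delta> $ \<mu> \<le> 1) \<longrightarrow>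
             (\<exists>D. vf_derivs (cc_ball \<Omega> L X d x (\<xi>1 *\<^sub>R \<delta>)) L (\<lambda>j y. dpow \<delta> (d j) *\<^sub>R X j y) (c x \<delta> l) D m \<and>
                  (\<Sum>\<beta>\<in>{\<beta>. set \<beta> \<subseteq> L \<and> length \<beta> \<le> m}.
                      (SUP y\<in>cc_ball \<Omega> L X d x (\<xi>1 *\<^sub>R \<delta>). ereal \<bar>D \<beta> y\<bar>)) \<le> ereal C))))"

end

theory Submission
  imports Defs
begin


lemma dpow_nonneg: "0 \<le> dpow \<delta> e"
  unfolding dpow_def by (intro prod_nonneg) auto

lemma dpow_add:
  assumes "\<forall>\<mu>. 0 \<le> e1 $ \<mu>" "\<forall>\<mu>. 0 \<le> e2 $ \<mu>"
  shows "dpow \<delta> (e1 + e2) = dpow \<delta> e1 * dpow \<delta> e2"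
  unfolding dpow_def prod.distrib[symmetric]
proof (rule prod.cong[OF refl])
  fix \<mu>
  have a: "0 \<le> e1 $ \<mu>" "0 \<le> e2 $ \<mu>" using assms by auto
  show "(if (e1 + e2) $ \<mu> = 0 then 1 else \<delta> $ \<mu> powr (e1 + e2) $ \<mu>) =
    (if e1 $ \<mu> = 0 then 1 else \<delta> $ \<mu> powr e1 $ \<mu>) * (if e2 $ \<mu> = 0 then 1 else \<delta> $ \<mu> powr e2 $ \<mu>)"
    using a by (auto simp: powr_add)
qed

lemma dpow_scale_pos:
  assumes "\<xi> > 0" "\<forall>\<mu>. 0 \<le> \<delta> $ \<mu>" "dpow \<delta> e > 0"
  shows "dpow (\<xi> *\<^sub>R \<delta>) e > 0"
proof -
  let ?f = "\<lambda>\<mu>. (if e $ \<mu> = 0 then 1 else \<delta> $ \<mu> powr e $ \<mu>)"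
  have pos: "prod ?f UNIV > 0" using assms(3) unfolding dpow_def .
  have fnz: "?f \<mu> \<noteq> 0" for \<mu>
  proof
    assume "?f \<mu> = 0"
    then have "prod ?f UNIV = 0" using prod_zero_iff[OF finite, of ?f UNIV] by blast
    with pos show False by simp
  qed
  have nz: "\<forall>\<mu>. e $ \<mu> \<noteq> 0 \<longrightarrow> \<delta> $ \<mu> \<noteq> 0"
  proof (intro allI impI)
    fix \<mu> assume "e $ \<mu> \<noteq> 0"
    then show "\<delta> $ \<mu> \<noteq> 0" using fnz[of \<mu>] by auto
  qed
  have "0 < (if e $ \<mu> = 0 then 1 else (\<xi> *\<^sub>R \<delta>) $ \<mu> powr e $ \<mu>)" for \<mu>
  proof (cases "e $ \<mu> = 0")
    case False
    then have "\<xi> * \<delta> $ \<mu> \<noteq> 0" using nz assms(1) by simp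
    then show ?thesis using False by simp
  qed simp
  then show ?thesis unfolding dpow_def by (intro prod_pos) auto
qed

lemma dpow_scale_mono:
  assumes "0 < \<xi>" "\<xi> \<le> \<xi>'" "\<forall>\<mu>. 0 \<le> \<delta> $ \<mu>" "\<forall>\<mu>. 0 \<le> e $ \<mu>"
  shows "dpow (\<xi> *\<^sub>R \<delta>) e \<le> dpow (\<xi>' *\<^sub>R \<delta>) e"
  unfolding dpow_def
proof (rule prod_mono)
  fix \<mu> :: 'a
  have "\<xi> * \<delta> $ \<mu> \<le> \<xi>' * \<delta> $ \<mu>" using assms by (simp add: mult_right_mono)
  then show "0 \<le> (if e $ \<mu> = 0 then 1 else (\<xi> *\<^sub>R \<delta>) $ \<mu> powr e $ \<mu>) \<and>
         (if e $ \<mu> = 0 then 1 else (\<xi> *\<^sub>R \<delta>) $ \<mu> powr e $ \<mu>)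
         \<le> (if e $ \<mu> = 0 then 1 else (\<xi>' *\<^sub>R \<delta>) $ \<mu> powr e $ \<mu>)"
  proof (cases "e $ \<mu> = 0")
    case False
    have "0 \<le> \<xi> * \<delta> $ \<mu>" using assms by simp
    then have "(\<xi> * \<delta> $ \<mu>) powr e $ \<mu> \<le> (\<xi>' * \<delta> $ \<mu>) powr e $ \<mu>"
      using powr_mono2[of "e $ \<mu>" "\<xi> * \<delta> $ \<mu>" "\<xi>' * \<delta> $ \<mu>"] assms(4) \<open>\<xi> * \<delta> $ \<mu> \<le> \<xi>' * \<delta> $ \<mu>\<close> by blast
    then show ?thesis using False by simp
  qed simp
qed

lemma dpow_scale_zero:
  assumes "0 < \<xi>" "0 < \<xi>'" "dpow (\<xi>' *\<^sub>R \<delta>) e = 0"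
  shows "dpow (\<xi> *\<^sub>R \<delta>) e = 0"
proof -
  let ?f = "\<lambda>\<mu>. (if e $ \<mu> = 0 then 1 else (\<xi>' *\<^sub>R \<delta>) $ \<mu> powr e $ \<mu>)"
  let ?g = "\<lambda>\<mu>. (if e $ \<mu> = 0 then 1 else (\<xi> *\<^sub>R \<delta>) $ \<mu> powr e $ \<mu>)"
  have "prod ?f UNIV = 0" using assms(3) unfolding dpow_def .
  then obtain \<mu> where "?f \<mu> = 0" using prod_zero_iff[OF finite, of ?f UNIV] by blast
  then have "e $ \<mu> \<noteq> 0" "\<delta> $ \<mu> = 0" using assms by (auto split: if_splits)
  then have "?g \<mu> = 0" by simp
  then have "prod ?g UNIV = 0" using prod_zero_iff[OF finite, of ?g UNIV] by blast
  then show ?thesis unfolding dpow_def .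
qed

lemma ode_rescale:
  assumes "ode_solution \<Omega> L X d x \<Delta> a \<gamma>"
    and "\<forall>l\<in>L. \<forall>t. a l t * dpow \<Delta> (d l) = a' l t * dpow \<Delta>' (d l)"
  shows "ode_solution \<Omega> L X d x \<Delta>' a' \<gamma>"
proof -
  have "\<And>t. (\<Sum>l\<in>L. (a l t * dpow \<Delta> (d l)) *\<^sub>R X l (\<gamma> t)) = (\<Sum>l\<in>L. (a' l t * dpow \<Delta>' (d l)) *\<^sub>R X l (\<gamma> t))"
    using assms(2) by (intro sum.cong) auto
  then show ?thesis using assms(1) unfolding ode_solution_def by simp
qed

lemma rescale_coeffs:
  assumes "0 < \<xi>" "\<xi> \<le> \<xi>'" "\<forall>\<mu>. 0 \<le> \<delta> $ \<mu>" "\<forall>l\<in>L. \<forall>\<mu>. 0 \<le> d l $ \<mu>"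
    and "admissible_coeffs L a"
  shows "\<exists>a'. admissible_coeffs L a' \<and> (\<forall>l\<in>L. \<forall>t. a' l t * dpow (\<xi>' *\<^sub>R \<delta>) (d l) = a l t * dpow (\<xi> *\<^sub>R \<delta>) (d l))"
proof -
  define r where "r l = dpow (\<xi> *\<^sub>R \<delta>) (d l) / dpow (\<xi>' *\<^sub>R \<delta>) (d l)" for l
  define a' where "a' l t = a l t * r l" for l t
  have r01: "0 \<le> r l \<and> r l \<le> 1" if "l \<in> L" for l
    using dpow_scale_mono[OF assms(1,2,3), of "d l"] assms(4) that dpow_nonneg[of "\<xi> *\<^sub>R \<delta>" "d l"]
    unfolding r_def by (auto simp: divide_le_eq_1)
  have eq: "a' l t * dpow (\<xi>' *\<^sub>R \<delta>) (d l) = a l t * dpow (\<xi> *\<^sub>R \<delta>) (d l)" if "l \<in> L" for l t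
  proof (cases "dpow (\<xi>' *\<^sub>R \<delta>) (d l) = 0")
    case True
    then show ?thesis using dpow_scale_zero[of \<xi> \<xi>' \<delta> "d l"] assms(1,2) by simp
  qed (simp add: a'_def r_def)
  obtain s where s: "s < 1" "AE t in lebesgue. t \<in> {0..1} \<longrightarrow> (\<Sum>l\<in>L. \<bar>a l t\<bar>^2) \<le> s"
    using assms(5) unfolding admissible_coeffs_def by blast
  have "AE t in lebesgue. t \<in> {0..1} \<longrightarrow> (\<Sum>l\<in>L. \<bar>a' l t\<bar>^2) \<le> s"
    using s(2)
  proof eventually_elim
    case (elim t)
    have "(\<Sum>l\<in>L. \<bar>a' l t\<bar>^2) \<le> (\<Sum>l\<in>L. \<bar>a l t\<bar>^2)"
    proof (intro sum_mono)
      fix l assume "l \<in> L"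
      then have "\<bar>a' l t\<bar> \<le> \<bar>a l t\<bar>" using r01[of l] unfolding a'_def
        by (auto simp: abs_mult intro!: mult_left_le)
      then show "\<bar>a' l t\<bar>^2 \<le> \<bar>a l t\<bar>^2" by (intro power_mono) auto
    qed
    then show ?case using elim by auto
  qed
  moreover have "\<forall>l\<in>L. a' l \<in> borel_measurable lebesgue"
    using assms(5) unfolding admissible_coeffs_def a'_def by auto
  ultimately have "admissible_coeffs L a'" unfolding admissible_coeffs_def using s(1) by blast
  then show ?thesis using eq by blast
qed

lemma cc_ball_mono:
  assumes "0 < \<xi>" "\<xi> \<le> \<xi>'" "\<forall>\<mu>. 0 \<le> \<delta> $ \<mu>" "\<forall>l\<in>L. \<forall>\<mu>. 0 \<le> d l $ \<mu>"
  shows "cc_ball \<Omega> L X d x (\<xi> *\<^sub>R \<delta>) \<subseteq> cc_ball \<Omega> L X d x (\<xi>' *\<^sub>R \<delta>)"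
proof
  fix y assume "y \<in> cc_ball \<Omega> L X d x (\<xi> *\<^sub>R \<delta>)"
  then obtain a \<gamma> where y: "y \<in> \<Omega>" "admissible_coeffs L a" "ode_solution \<Omega> L X d x (\<xi> *\<^sub>R \<delta>) a \<gamma>" "\<gamma> 1 = y"
    unfolding cc_ball_def by blast
  obtain a' where a': "admissible_coeffs L a'" "\<forall>l\<in>L. \<forall>t. a' l t * dpow (\<xi>' *\<^sub>R \<delta>) (d l) = a l t * dpow (\<xi> *\<^sub>R \<delta>) (d l)"
    using rescale_coeffs[OF assms y(2)] by blast
  have "ode_solution \<Omega> L X d x (\<xi>' *\<^sub>R \<delta>) a' \<gamma>"
    by (rule ode_rescale[OF y(3)]) (use a'(2) in auto)
  then show "y \<in> cc_ball \<Omega> L X d x (\<xi>' *\<^sub>R \<delta>)"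
    unfolding cc_ball_def using y a' by blast
qed

lemma vec_const_scale: "(\<chi> \<mu>. \<xi>) = \<xi> *\<^sub>R (\<chi> \<mu>. (1::real))"
  by (simp add: vec_eq_iff)

lemma cond_C_mono:
  assumes "0 < \<xi>" "\<xi> \<le> \<xi>'" "\<forall>l\<in>L. \<forall>\<mu>. 0 \<le> d l $ \<mu>"
    and "cond_C \<Omega> L X d x (\<chi> \<mu>. \<xi>')"
  shows "cond_C \<Omega> L X d x ((\<chi> \<mu>. \<xi>) :: real^'v)"
  unfolding cond_C_def
proof (intro allI impI)
  fix a assume a: "admissible_coeffs L a"
  have o: "\<forall>\<mu>. 0 \<le> (\<chi> \<mu>. (1::real)) $ \<mu>" by simp
  obtain a' where a': "admissible_coeffs L a'" "\<forall>l\<in>L. \<forall>t. a' l t * dpow (\<xi>' *\<^sub>R (\<chi> \<mu>. 1::real^'v)) (d l) = a l t * dpow (\<xi> *\<^sub>R (\<chi> \<mu>. 1)) (d l)"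
    using rescale_coeffs[OF assms(1,2) o assms(3) a] by blast
  obtain \<gamma> where "ode_solution \<Omega> L X d x (\<chi> \<mu>. \<xi>') a' \<gamma>"
    using assms(4) a'(1) unfolding cond_C_def by blast
  then have "ode_solution \<Omega> L X d x (\<xi>' *\<^sub>R (\<chi> \<mu>. 1)) a' \<gamma>" by (simp add: vec_const_scale[symmetric])
  then have "ode_solution \<Omega> L X d x (\<xi> *\<^sub>R (\<chi> \<mu>. 1)) a \<gamma>"
    by (rule ode_rescale) (use a'(2) in auto)
  then show "\<exists>\<gamma>. ode_solution \<Omega> L X d x (\<chi> \<mu>. \<xi>) a \<gamma>" by (auto simp: vec_const_scale[symmetric])
qed



lemma abs_cont_cong:
  assumes "\<forall>u\<in>{a..b}. f u = g u" "abs_cont_on a b f"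
  shows "abs_cont_on a b g"
  unfolding abs_cont_on_def
proof (intro allI impI)
  fix \<epsilon> :: real assume "\<epsilon> > 0"
  then obtain \<eta> where \<eta>: "\<eta> > 0" "\<forall>(n::nat) (u::nat \<Rightarrow> real) v.
        (\<forall>k<n. a \<le> u k \<and> u k \<le> v k \<and> v k \<le> b) \<and>
        (\<forall>k<n. \<forall>j<n. k \<noteq> j \<longrightarrow> v k \<le> u j \<or> v j \<le> u k) \<and>
        (\<Sum>k<n. v k - u k) < \<eta>
        \<longrightarrow> (\<Sum>k<n. norm (f (v k) - f (u k))) < \<epsilon>"
    using assms(2) unfolding abs_cont_on_def by blast
  show "\<exists>\<eta>>0. \<forall>(n::nat) (u::nat \<Rightarrow> real) v.
        (\<forall>k<n. a \<le> u k \<and> u k \<le> v k \<and> v k \<le> b) \<and>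
        (\<forall>k<n. \<forall>j<n. k \<noteq> j \<longrightarrow> v k \<le> u j \<or> v j \<le> u k) \<and>
        (\<Sum>k<n. v k - u k) < \<eta>
        \<longrightarrow> (\<Sum>k<n. norm (g (v k) - g (u k))) < \<epsilon>"
  proof (intro exI[of _ \<eta>] conjI allI impI)
    fix n :: nat and u v :: "nat \<Rightarrow> real"
    assume h: "(\<forall>k<n. a \<le> u k \<and> u k \<le> v k \<and> v k \<le> b) \<and>
        (\<forall>k<n. \<forall>j<n. k \<noteq> j \<longrightarrow> v k \<le> u j \<or> v j \<le> u k) \<and> (\<Sum>k<n. v k - u k) < \<eta>"
    have "(\<Sum>k<n. norm (g (v k) - g (u k))) = (\<Sum>k<n. norm (f (v k) - f (u k)))"
      using h assms(1) by (intro sum.cong) auto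
    then show "(\<Sum>k<n. norm (g (v k) - g (u k))) < \<epsilon>" using \<eta>(2) h by auto
  qed (use \<eta> in auto)
qed

lemma abs_cont_lipschitz:
  assumes "0 \<le> K" "\<forall>u\<in>{a..b}. \<forall>v\<in>{a..b}. norm (f v - f u) \<le> K * \<bar>v - u\<bar>"
  shows "abs_cont_on a b f"
  unfolding abs_cont_on_def
proof (intro allI impI)
  fix \<epsilon> :: real assume e: "\<epsilon> > 0"
  show "\<exists>\<eta>>0. \<forall>(n::nat) (u::nat \<Rightarrow> real) v.
        (\<forall>k<n. a \<le> u k \<and> u k \<le> v k \<and> v k \<le> b) \<and>
        (\<forall>k<n. \<forall>j<n. k \<noteq> j \<longrightarrow> v k \<le> u j \<or> v j \<le> u k) \<and>
        (\<Sum>k<n. v k - u k) < \<eta>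
        \<longrightarrow> (\<Sum>k<n. norm (f (v k) - f (u k))) < \<epsilon>"
  proof (intro exI[of _ "\<epsilon> / (K + 1)"] conjI allI impI)
    show "\<epsilon> / (K + 1) > 0" using e assms(1) by simp
    fix n :: nat and u v :: "nat \<Rightarrow> real"
    assume h: "(\<forall>k<n. a \<le> u k \<and> u k \<le> v k \<and> v k \<le> b) \<and>
        (\<forall>k<n. \<forall>j<n. k \<noteq> j \<longrightarrow> v k \<le> u j \<or> v j \<le> u k) \<and> (\<Sum>k<n. v k - u k) < \<epsilon> / (K + 1)"
    have "(\<Sum>k<n. norm (f (v k) - f (u k))) \<le> (\<Sum>k<n. K * (v k - u k))"
    proof (intro sum_mono)
      fix k assume "k \<in> {..<n}"
      then have "a \<le> u k" "u k \<le> v k" "v k \<le> b" using h by auto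
      then have "u k \<in> {a..b}" "v k \<in> {a..b}" by auto
      then have "norm (f (v k) - f (u k)) \<le> K * \<bar>v k - u k\<bar>" using assms(2) by blast
      then show "norm (f (v k) - f (u k)) \<le> K * (v k - u k)" using \<open>u k \<le> v k\<close> by simp
    qed
    also have "\<dots> = K * (\<Sum>k<n. v k - u k)" by (simp add: sum_distrib_left)
    also have "\<dots> \<le> K * (\<epsilon> / (K + 1))" using h assms(1) by (intro mult_left_mono) auto
    also have "\<dots> < \<epsilon>" using e assms(1) by (simp add: field_simps)
    finally show "(\<Sum>k<n. norm (f (v k) - f (u k))) < \<epsilon>" .
  qed
qed

lemma abs_cont_scale:
  assumes "0 < r" "abs_cont_on 0 1 \<gamma>" "\<forall>u\<in>{0..r}. \<rho> u = \<gamma> (u / r)"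
  shows "abs_cont_on 0 r \<rho>"
  unfolding abs_cont_on_def
proof (intro allI impI)
  fix \<epsilon> :: real assume "\<epsilon> > 0"
  then obtain \<eta> where \<eta>: "\<eta> > 0" "\<forall>(n::nat) (u::nat \<Rightarrow> real) v.
        (\<forall>k<n. 0 \<le> u k \<and> u k \<le> v k \<and> v k \<le> 1) \<and>
        (\<forall>k<n. \<forall>j<n. k \<noteq> j \<longrightarrow> v k \<le> u j \<or> v j \<le> u k) \<and>
        (\<Sum>k<n. v k - u k) < \<eta>
        \<longrightarrow> (\<Sum>k<n. norm (\<gamma> (v k) - \<gamma> (u k))) < \<epsilon>"
    using assms(2) unfolding abs_cont_on_def by blast
  show "\<exists>\<eta>>0. \<forall>(n::nat) (u::nat \<Rightarrow> real) v.
        (\<forall>k<n. 0 \<le> u k \<and> u k \<le> v k \<and> v k \<le> r) \<and>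
        (\<forall>k<n. \<forall>j<n. k \<noteq> j \<longrightarrow> v k \<le> u j \<or> v j \<le> u k) \<and>
        (\<Sum>k<n. v k - u k) < \<eta>
        \<longrightarrow> (\<Sum>k<n. norm (\<rho> (v k) - \<rho> (u k))) < \<epsilon>"
  proof (intro exI[of _ "\<eta> * r"] conjI allI impI)
    show "\<eta> * r > 0" using \<eta>(1) assms(1) by simp
    fix n :: nat and u v :: "nat \<Rightarrow> real"
    assume h: "(\<forall>k<n. 0 \<le> u k \<and> u k \<le> v k \<and> v k \<le> r) \<and>
        (\<forall>k<n. \<forall>j<n. k \<noteq> j \<longrightarrow> v k \<le> u j \<or> v j \<le> u k) \<and> (\<Sum>k<n. v k - u k) < \<eta> * r"
    define u' where "u' k = u k / r" for k
    define v' where "v' k = v k / r" for k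
    have 1: "\<forall>k<n. 0 \<le> u' k \<and> u' k \<le> v' k \<and> v' k \<le> 1"
      using h assms(1) unfolding u'_def v'_def by (auto simp: divide_right_mono)
    have 2: "\<forall>k<n. \<forall>j<n. k \<noteq> j \<longrightarrow> v' k \<le> u' j \<or> v' j \<le> u' k"
    proof (intro allI impI)
      fix k j assume "k < n" "j < n" "k \<noteq> j"
      then have "v k \<le> u j \<or> v j \<le> u k" using h by blast
      then show "v' k \<le> u' j \<or> v' j \<le> u' k" unfolding u'_def v'_def
        using assms(1) by (meson divide_right_mono less_imp_le)
    qed
    have "(\<Sum>k<n. v' k - u' k) = (\<Sum>k<n. v k - u k) / r"
      unfolding u'_def v'_def by (simp add: sum_divide_distrib diff_divide_distrib)
    also have "\<dots> < \<eta>" using h assms(1) by (simp add: divide_less_eq)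
    finally have 3: "(\<Sum>k<n. v' k - u' k) < \<eta>" .
    have "(\<Sum>k<n. norm (\<rho> (v k) - \<rho> (u k))) = (\<Sum>k<n. norm (\<gamma> (v' k) - \<gamma> (u' k)))"
      using h assms(3) unfolding u'_def v'_def by (intro sum.cong) auto
    also have "\<dots> < \<epsilon>" using \<eta>(2) 1 2 3 by blast
    finally show "(\<Sum>k<n. norm (\<rho> (v k) - \<rho> (u k))) < \<epsilon>" .
  qed
qed

lemma abs_cont_glue:
  fixes f :: "real \<Rightarrow> 'a::real_normed_vector"
  assumes "a \<le> c" "c \<le> b" "abs_cont_on a c f" "abs_cont_on c b f"
  shows "abs_cont_on a b f"
  unfolding abs_cont_on_def
proof (intro allI impI)
  fix \<epsilon> :: real assume e: "\<epsilon> > 0"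
  then have e2: "\<epsilon>/2 > 0" by simp
  obtain \<eta>1 where \<eta>1: "\<eta>1 > 0" "\<forall>(n::nat) (u::nat \<Rightarrow> real) v.
        (\<forall>k<n. a \<le> u k \<and> u k \<le> v k \<and> v k \<le> c) \<and>
        (\<forall>k<n. \<forall>j<n. k \<noteq> j \<longrightarrow> v k \<le> u j \<or> v j \<le> u k) \<and>
        (\<Sum>k<n. v k - u k) < \<eta>1
        \<longrightarrow> (\<Sum>k<n. norm (f (v k) - f (u k))) < \<epsilon>/2"
    using assms(3) e2 unfolding abs_cont_on_def by blast
  obtain \<eta>2 where \<eta>2: "\<eta>2 > 0" "\<forall>(n::nat) (u::nat \<Rightarrow> real) v.
        (\<forall>k<n. c \<le> u k \<and> u k \<le> v k \<and> v k \<le> b) \<and>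
        (\<forall>k<n. \<forall>j<n. k \<noteq> j \<longrightarrow> v k \<le> u j \<or> v j \<le> u k) \<and>
        (\<Sum>k<n. v k - u k) < \<eta>2
        \<longrightarrow> (\<Sum>k<n. norm (f (v k) - f (u k))) < \<epsilon>/2"
    using assms(4) e2 unfolding abs_cont_on_def by blast
  show "\<exists>\<eta>>0. \<forall>(n::nat) (u::nat \<Rightarrow> real) v.
        (\<forall>k<n. a \<le> u k \<and> u k \<le> v k \<and> v k \<le> b) \<and>
        (\<forall>k<n. \<forall>j<n. k \<noteq> j \<longrightarrow> v k \<le> u j \<or> v j \<le> u k) \<and>
        (\<Sum>k<n. v k - u k) < \<eta>
        \<longrightarrow> (\<Sum>k<n. norm (f (v k) - f (u k))) < \<epsilon>"
  proof (intro exI[of _ "min \<eta>1 \<eta>2"] conjI allI impI)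
    show "min \<eta>1 \<eta>2 > 0" using \<eta>1(1) \<eta>2(1) by simp
    fix n :: nat and u v :: "nat \<Rightarrow> real"
    assume h: "(\<forall>k<n. a \<le> u k \<and> u k \<le> v k \<and> v k \<le> b) \<and>
        (\<forall>k<n. \<forall>j<n. k \<noteq> j \<longrightarrow> v k \<le> u j \<or> v j \<le> u k) \<and> (\<Sum>k<n. v k - u k) < min \<eta>1 \<eta>2"
    define uL where "uL k = min (u k) c" for k
    define vL where "vL k = min (v k) c" for k
    define uR where "uR k = max (u k) c" for k
    define vR where "vR k = max (v k) c" for k
    have sL: "(\<Sum>k<n. vL k - uL k) \<le> (\<Sum>k<n. v k - u k)"
      using h unfolding uL_def vL_def by (intro sum_mono) auto
    have sR: "(\<Sum>k<n. vR k - uR k) \<le> (\<Sum>k<n. v k - u k)"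
      using h unfolding uR_def vR_def by (intro sum_mono) auto
    have L: "(\<Sum>k<n. norm (f (vL k) - f (uL k))) < \<epsilon>/2"
    proof -
      have "(\<forall>k<n. a \<le> uL k \<and> uL k \<le> vL k \<and> vL k \<le> c)"
        using h assms(1) unfolding uL_def vL_def by auto
      moreover have "(\<forall>k<n. \<forall>j<n. k \<noteq> j \<longrightarrow> vL k \<le> uL j \<or> vL j \<le> uL k)"
        using h unfolding uL_def vL_def by (metis min.mono order_refl)
      moreover have "(\<Sum>k<n. vL k - uL k) < \<eta>1" using sL h by linarith
      ultimately show ?thesis using \<eta>1(2) by blast
    qed
    have R: "(\<Sum>k<n. norm (f (vR k) - f (uR k))) < \<epsilon>/2"
    proof -
      have "(\<forall>k<n. c \<le> uR k \<and> uR k \<le> vR k \<and> vR k \<le> b)"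
        using h assms(2) unfolding uR_def vR_def by auto
      moreover have "(\<forall>k<n. \<forall>j<n. k \<noteq> j \<longrightarrow> vR k \<le> uR j \<or> vR j \<le> uR k)"
        using h unfolding uR_def vR_def by (metis max.mono order_refl)
      moreover have "(\<Sum>k<n. vR k - uR k) < \<eta>2" using sR h by linarith
      ultimately show ?thesis using \<eta>2(2) by blast
    qed
    have "(\<Sum>k<n. norm (f (v k) - f (u k))) \<le> (\<Sum>k<n. norm (f (vL k) - f (uL k)) + norm (f (vR k) - f (uR k)))"
    proof (intro sum_mono)
      fix k assume "k \<in> {..<n}"
      then have uv: "u k \<le> v k" using h by auto
      consider "v k \<le> c" | "c \<le> u k" | "u k < c" "c < v k" by linarith
      then show "norm (f (v k) - f (u k)) \<le> norm (f (vL k) - f (uL k)) + norm (f (vR k) - f (uR k))"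
      proof cases
        case 1 then show ?thesis using uv unfolding uL_def vL_def uR_def vR_def by simp
      next
        case 2 then show ?thesis using uv unfolding uL_def vL_def uR_def vR_def by simp
      next
        case 3
        have "norm (f (v k) - f (u k)) = norm ((f c - f (u k)) + (f (v k) - f c))" by simp
        also have "\<dots> \<le> norm (f c - f (u k)) + norm (f (v k) - f c)" by (rule norm_triangle_ineq)
        finally show ?thesis using 3 unfolding uL_def vL_def uR_def vR_def by simp
      qed
    qed
    also have "\<dots> = (\<Sum>k<n. norm (f (vL k) - f (uL k))) + (\<Sum>k<n. norm (f (vR k) - f (uR k)))"
      by (simp add: sum.distrib)
    also have "\<dots> < \<epsilon>" using L R by simp
    finally show "(\<Sum>k<n. norm (f (v k) - f (u k))) < \<epsilon>" .
  qed
qed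



lemma smooth_onD:
  assumes "smooth_on S f"
  shows "\<exists>f'. continuous_on S f \<and> (\<forall>x\<in>S. (f has_derivative f' x) (at x)) \<and> (\<forall>v. smooth_on S (\<lambda>x. f' x v))"
  using assms by (cases rule: smooth_on.cases) blast

lemma smooth_on_continuous: "smooth_on S f \<Longrightarrow> continuous_on S f"
  using smooth_onD by blast

lemma smooth_lipschitz:
  fixes F :: "'a::euclidean_space \<Rightarrow> 'b::real_normed_vector"
  assumes "open \<Omega>" "y \<in> \<Omega>" "smooth_on \<Omega> F"
  shows "\<exists>r>0. \<exists>K\<ge>0. cball y r \<subseteq> \<Omega> \<and> (\<forall>z\<in>cball y r. \<forall>w\<in>cball y r. norm (F z - F w) \<le> K * norm (z - w))"
proof -
  obtain f' where f': "continuous_on \<Omega> F" "\<forall>x\<in>\<Omega>. (F has_derivative f' x) (at x)" "\<forall>v. smooth_on \<Omega> (\<lambda>x. f' x v)"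
    using smooth_onD[OF assms(3)] by blast
  obtain r where r: "r > 0" "cball y r \<subseteq> \<Omega>" using assms(1,2) open_contains_cball by blast
  have "\<forall>b\<in>Basis. \<exists>B. \<forall>x\<in>cball y r. norm (f' x b) \<le> B"
  proof
    fix b :: 'a
    have "continuous_on \<Omega> (\<lambda>x. f' x b)" using f'(3) smooth_on_continuous by blast
    then have "continuous_on (cball y r) (\<lambda>x. f' x b)" using r(2) continuous_on_subset by blast
    then have "compact ((\<lambda>x. f' x b) ` cball y r)" by (intro compact_continuous_image) auto
    then have "bounded ((\<lambda>x. f' x b) ` cball y r)" by (rule compact_imp_bounded)
    then show "\<exists>B. \<forall>x\<in>cball y r. norm (f' x b) \<le> B" unfolding bounded_iff by blast
  qed
  then obtain B where B: "\<forall>b\<in>Basis. \<forall>x\<in>cball y r. norm (f' x b) \<le> B b" by metis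
  define K where "K = (\<Sum>b\<in>Basis. \<bar>B b\<bar>)"
  have K0: "K \<ge> 0" unfolding K_def by (simp add: sum_nonneg)
  have on: "onorm (f' x) \<le> K" if x: "x \<in> cball y r" for x
  proof (rule onorm_le)
    fix v :: 'a
    have lin: "linear (f' x)" using f'(2) x r(2) has_derivative_bounded_linear bounded_linear.linear by blast
    have "f' x v = f' x (\<Sum>b\<in>Basis. (v \<bullet> b) *\<^sub>R b)" by (simp add: euclidean_representation)
    also have "\<dots> = (\<Sum>b\<in>Basis. (v \<bullet> b) *\<^sub>R f' x b)" using lin by (simp add: linear_sum linear_scale)
    finally have eq: "f' x v = (\<Sum>b\<in>Basis. (v \<bullet> b) *\<^sub>R f' x b)" .
    have "norm (f' x v) \<le> (\<Sum>b\<in>Basis. norm ((v \<bullet> b) *\<^sub>R f' x b))" unfolding eq by (rule norm_sum)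
    also have "\<dots> \<le> (\<Sum>b\<in>Basis. norm v * \<bar>B b\<bar>)"
    proof (intro sum_mono)
      fix b :: 'a assume b: "b \<in> Basis"
      have "norm ((v \<bullet> b) *\<^sub>R f' x b) = \<bar>v \<bullet> b\<bar> * norm (f' x b)" by simp
      also have "\<dots> \<le> norm v * \<bar>B b\<bar>"
        using Basis_le_norm[OF b, of v] B b x by (intro mult_mono) force+
      finally show "norm ((v \<bullet> b) *\<^sub>R f' x b) \<le> norm v * \<bar>B b\<bar>" .
    qed
    also have "\<dots> = K * norm v" unfolding K_def by (simp add: sum_distrib_left mult.commute)
    finally show "norm (f' x v) \<le> K * norm v" .
  qed
  have "\<forall>z\<in>cball y r. \<forall>w\<in>cball y r. norm (F z - F w) \<le> K * norm (z - w)"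
  proof (intro ballI)
    fix z w assume zw: "z \<in> cball y r" "w \<in> cball y r"
    show "norm (F z - F w) \<le> K * norm (z - w)"
    proof (rule differentiable_bound[OF convex_cball _ on zw])
      fix x assume "x \<in> cball y r"
      then show "(F has_derivative f' x) (at x within cball y r)"
        using f'(2) r(2) has_derivative_at_withinI by blast
    qed
  qed
  then show ?thesis using r K0 by blast
qed

lemma integral_diff_bound:
  fixes f :: "real \<Rightarrow> 'a::euclidean_space"
  assumes "continuous_on {a..b} f" "0 \<le> B" "\<forall>s\<in>{a..b}. norm (f s) \<le> B" "u \<in> {a..b}" "v \<in> {a..b}"
  shows "norm (integral {a..v} f - integral {a..u} f) \<le> B * \<bar>v - u\<bar>"
proof -
  have main: "norm (integral {a..v} f - integral {a..u} f) \<le> B * (v - u)"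
    if uv: "u \<le> v" "u \<in> {a..b}" "v \<in> {a..b}" for u v
  proof -
    have int: "f integrable_on {a..v}"
      using uv by (intro integrable_continuous_interval continuous_on_subset[OF assms(1)]) auto
    have "integral {a..u} f + integral {u..v} f = integral {a..v} f"
      using uv int by (intro Henstock_Kurzweil_Integration.integral_combine) auto
    then have eq: "integral {a..v} f - integral {a..u} f = integral {u..v} f" by (simp add: algebra_simps)
    have int2: "f integrable_on {u..v}"
      using uv by (intro integrable_continuous_interval continuous_on_subset[OF assms(1)]) auto
    have "\<forall>x\<in>cbox u v. norm (f x) \<le> B" using assms(3) uv by (auto simp: cbox_interval)
    moreover have "(f has_integral integral {u..v} f) (cbox u v)"
      using int2 by (simp add: cbox_interval integrable_integral)
    ultimately have "norm (integral {u..v} f) \<le> B * (v - u)"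
      using has_integral_bound[OF assms(2), of f "integral {u..v} f" u v] uv
      by (simp add: cbox_interval content_real)
    then show ?thesis using eq uv by simp
  qed
  show ?thesis
  proof (cases "u \<le> v")
    case True then show ?thesis using main[OF True assms(4,5)] by simp
  next
    case False
    then have "norm (integral {a..u} f - integral {a..v} f) \<le> B * (u - v)"
      using main[of v u] assms(4,5) by simp
    then show ?thesis using False by (simp add: norm_minus_commute)
  qed
qed



lemma clamp_real_in: "(h::real) \<ge> 0 \<Longrightarrow> clamp (-h) h t \<in> {-h..h}"
  using clamp_in_interval[of "-h" h t] by (simp add: cbox_interval)

lemma clamp_real_id: "(t::real) \<in> {-h..h} \<Longrightarrow> clamp (-h) h t = t"
  using clamp_cancel_cbox[of t "-h" h] by (simp add: cbox_interval)

lemma local_flow: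
  fixes F :: "'a::euclidean_space \<Rightarrow> 'a"
  assumes "open \<Omega>" "y \<in> \<Omega>" "smooth_on \<Omega> F"
  shows "\<exists>h>0. \<exists>\<zeta> M. 0 \<le> M \<and> \<zeta> 0 = y \<and>
     (\<forall>t\<in>{-h..h}. \<zeta> t \<in> \<Omega> \<and> (\<zeta> has_vector_derivative F (\<zeta> t)) (at t within {-h..h})) \<and>
     (\<forall>t\<in>{-h..h}. \<forall>t'\<in>{-h..h}. norm (\<zeta> t - \<zeta> t') \<le> M * \<bar>t - t'\<bar>)"
proof -
  obtain r K where rK: "r > 0" "K \<ge> 0" "cball y r \<subseteq> \<Omega>"
    "\<forall>z\<in>cball y r. \<forall>w\<in>cball y r. norm (F z - F w) \<le> K * norm (z - w)"
    using smooth_lipschitz[OF assms] by blast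
  have Fc: "continuous_on (cball y r) F"
    using smooth_on_continuous[OF assms(3)] rK(3) continuous_on_subset by blast
  have "bounded (F ` cball y r)" by (intro compact_imp_bounded compact_continuous_image Fc) auto
  then obtain M0 where M0: "\<forall>z\<in>cball y r. norm (F z) \<le> M0" unfolding bounded_iff by blast
  define M where "M = max M0 1"
  have M: "M > 0" "\<forall>z\<in>cball y r. norm (F z) \<le> M" using M0 unfolding M_def by force+
  define h where "h = min (r / M) (1 / (2 * K + 2))"
  have h0: "h > 0" unfolding h_def using M rK by simp
  have hM: "h * M \<le> r" unfolding h_def using M by (simp add: min_def field_simps)
  have hK: "h * K \<le> 1/2"
  proof -
    have "h \<le> 1 / (2 * K + 2)" unfolding h_def by simp
    then have "h * K \<le> 1 / (2 * K + 2) * K" using rK(2) by (rule mult_right_mono)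
    then have "h * K \<le> K / (2 * K + 2)" by simp
    also have "\<dots> \<le> 1/2" using rK(2) by (simp add: field_simps)
    finally show ?thesis .
  qed
  define \<Phi> where "\<Phi> g u = y + (integral {-h..u} (\<lambda>s. F (g s)) - integral {-h..0} (\<lambda>s. F (g s)))"
    for g :: "real \<Rightarrow> 'a" and u
  define S where "S = PiC UNIV (\<lambda>_::real. cball y r)"
  have memS: "g \<in> S \<longleftrightarrow> (\<forall>t. apply_bcontfun g t \<in> cball y r)" for g
    unfolding S_def mem_PiC_iff by auto
  have contFg: "continuous_on {-h..h} (\<lambda>s. F (apply_bcontfun g s))" if "g \<in> S" for g
    using that unfolding memS
    by (intro continuous_on_compose2[OF Fc]) auto
  have Phi_bound: "norm (\<Phi> (apply_bcontfun g) u - y) \<le> M * \<bar>u\<bar>" if "g \<in> S" "u \<in> {-h..h}" for g u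
  proof -
    have "norm (integral {-h..u} (\<lambda>s. F (apply_bcontfun g s)) - integral {-h..0} (\<lambda>s. F (apply_bcontfun g s))) \<le> M * \<bar>u - 0\<bar>"
    proof (rule integral_diff_bound[OF contFg[OF that(1)]])
      show "\<forall>s\<in>{-h..h}. norm (F (apply_bcontfun g s)) \<le> M" using that(1) M(2) unfolding memS by blast
    qed (use that M h0 in auto)
    then show ?thesis unfolding \<Phi>_def by simp
  qed
  have Phi_cont: "continuous_on {-h..h} (\<Phi> (apply_bcontfun g))" if "g \<in> S" for g
    unfolding \<Phi>_def
    by (intro continuous_intros indefinite_integral_continuous_1 integrable_continuous_interval contFg that)
  have exT: "\<exists>g'. \<forall>t. apply_bcontfun g' t = \<Phi> (apply_bcontfun g) (clamp (-h) h t)" if "g \<in> S" for g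
  proof -
    have "continuous_on (cbox (-h) h) (\<Phi> (apply_bcontfun g))" using Phi_cont[OF that] by (simp add: cbox_interval)
    then obtain g' :: "real \<Rightarrow>\<^sub>C 'a" where "\<And>t. apply_bcontfun g' t = \<Phi> (apply_bcontfun g) (clamp (-h) h t)"
      by (rule continuous_on_cbox_bcontfunE) blast
    then show ?thesis by blast
  qed
  define T where "T g = (SOME g'. \<forall>t. apply_bcontfun g' t = \<Phi> (apply_bcontfun g) (clamp (-h) h t))" for g
  have T: "apply_bcontfun (T g) t = \<Phi> (apply_bcontfun g) (clamp (-h) h t)" if "g \<in> S" for g t
    using someI_ex[OF exT[OF that]] unfolding T_def by blast
  have TS: "T ` S \<subseteq> S"
  proof
    fix g' assume "g' \<in> T ` S"
    then obtain g where g: "g \<in> S" "g' = T g" by blast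
    have "apply_bcontfun g' t \<in> cball y r" for t
    proof -
      have c: "clamp (-h) h t \<in> {-h..h}" using clamp_real_in h0 by simp
      have "norm (apply_bcontfun g' t - y) \<le> M * \<bar>clamp (-h) h t\<bar>" using T[OF g(1)] g Phi_bound c by simp
      also have "\<dots> \<le> M * h" using c M by (intro mult_left_mono) auto
      also have "\<dots> \<le> r" using hM by (simp add: mult.commute)
      finally show ?thesis by (simp add: dist_norm norm_minus_commute)
    qed
    then show "g' \<in> S" unfolding memS by blast
  qed
  have contr: "dist (T g1) (T g2) \<le> (1/2) * dist g1 g2" if g: "g1 \<in> S" "g2 \<in> S" for g1 g2
  proof (rule dist_bound)
    fix t
    let ?u = "clamp (-h) h t"
    have c: "?u \<in> {-h..h}" using clamp_real_in h0 by simp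
    let ?f = "\<lambda>s. F (apply_bcontfun g1 s) - F (apply_bcontfun g2 s)"
    have i1: "(\<lambda>s. F (apply_bcontfun g1 s)) integrable_on {-h..v}" if "v \<in> {-h..h}" for v
      using that by (intro integrable_continuous_interval continuous_on_subset[OF contFg[OF g(1)]]) auto
    have i2: "(\<lambda>s. F (apply_bcontfun g2 s)) integrable_on {-h..v}" if "v \<in> {-h..h}" for v
      using that by (intro integrable_continuous_interval continuous_on_subset[OF contFg[OF g(2)]]) auto
    have "apply_bcontfun (T g1) t - apply_bcontfun (T g2) t = integral {-h..?u} ?f - integral {-h..0} ?f"
      unfolding T[OF g(1)] T[OF g(2)] \<Phi>_def
      using i1[OF c] i2[OF c] i1[of 0] i2[of 0] h0
      by (simp add: Henstock_Kurzweil_Integration.integral_diff algebra_simps)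
    moreover have "norm (integral {-h..?u} ?f - integral {-h..0} ?f) \<le> (K * dist g1 g2) * \<bar>?u - 0\<bar>"
    proof (rule integral_diff_bound)
      show "continuous_on {-h..h} ?f" using contFg g by (intro continuous_intros) auto
      show "0 \<le> K * dist g1 g2" using rK(2) by simp
      show "\<forall>s\<in>{-h..h}. norm (?f s) \<le> K * dist g1 g2"
      proof
        fix s
        have "norm (?f s) \<le> K * norm (apply_bcontfun g1 s - apply_bcontfun g2 s)"
          using rK(4) g unfolding memS by blast
        also have "\<dots> \<le> K * dist g1 g2" using rK(2) dist_bounded[of g1 s g2]
          by (intro mult_left_mono) (auto simp: dist_norm)
        finally show "norm (?f s) \<le> K * dist g1 g2" .
      qed
    qed (use c h0 in auto)
    moreover have "(K * dist g1 g2) * \<bar>?u - 0\<bar> \<le> (1/2) * dist g1 g2"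
    proof -
      have "(K * dist g1 g2) * \<bar>?u - 0\<bar> \<le> (K * dist g1 g2) * h" using c rK(2)
        by (intro mult_left_mono) auto
      also have "\<dots> = (h * K) * dist g1 g2" by simp
      also have "\<dots> \<le> (1/2) * dist g1 g2" using hK by (intro mult_right_mono) auto
      finally show ?thesis .
    qed
    ultimately show "dist (apply_bcontfun (T g1) t) (apply_bcontfun (T g2) t) \<le> (1/2) * dist g1 g2"
      by (simp add: dist_norm)
  qed
  have complS: "complete S"
    unfolding S_def by (simp add: complete_eq_closed closed_PiC)
  have neS: "S \<noteq> {}"
  proof -
    have "const_bcontfun y \<in> S" unfolding memS using rK(1) by (simp add: const_bcontfun.rep_eq)
    then show ?thesis by blast
  qed
  obtain gz where gz: "gz \<in> S" "T gz = gz"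
    using Banach_fix[OF complS neS _ _ TS contr] by auto
  define \<zeta> where "\<zeta> = apply_bcontfun gz"
  have zeq: "\<zeta> t = \<Phi> \<zeta> t" if "t \<in> {-h..h}" for t
    using T[OF gz(1), of t] gz(2) clamp_real_id[OF that] unfolding \<zeta>_def by simp
  have zin: "\<zeta> t \<in> cball y r" for t using gz(1) unfolding memS \<zeta>_def by blast
  have cz: "continuous_on {-h..h} (\<lambda>s. F (\<zeta> s))" using contFg[OF gz(1)] unfolding \<zeta>_def .
  have "\<zeta> 0 = y" using zeq[of 0] h0 unfolding \<Phi>_def by simp
  moreover have "\<forall>t\<in>{-h..h}. \<zeta> t \<in> \<Omega> \<and> (\<zeta> has_vector_derivative F (\<zeta> t)) (at t within {-h..h})"
  proof
    fix t :: real assume t: "t \<in> {-h..h}"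
    have "((\<lambda>u. integral {-h..u} (\<lambda>s. F (\<zeta> s))) has_vector_derivative F (\<zeta> t)) (at t within {-h..h})"
      by (rule integral_has_vector_derivative[OF cz t])
    then have "(\<Phi> \<zeta> has_vector_derivative F (\<zeta> t)) (at t within {-h..h})"
      unfolding \<Phi>_def by (auto intro!: derivative_eq_intros)
    then have "(\<zeta> has_vector_derivative F (\<zeta> t)) (at t within {-h..h})"
      by (rule has_vector_derivative_transform[OF t, rotated]) (simp add: zeq)
    then show "\<zeta> t \<in> \<Omega> \<and> (\<zeta> has_vector_derivative F (\<zeta> t)) (at t within {-h..h})"
      using zin rK(3) by blast
  qed
  moreover have "\<forall>t\<in>{-h..h}. \<forall>t'\<in>{-h..h}. norm (\<zeta> t - \<zeta> t') \<le> M * \<bar>t - t'\<bar>"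
  proof (intro ballI)
    fix t t' :: real assume tt: "t \<in> {-h..h}" "t' \<in> {-h..h}"
    have "norm (integral {-h..t} (\<lambda>s. F (\<zeta> s)) - integral {-h..t'} (\<lambda>s. F (\<zeta> s))) \<le> M * \<bar>t - t'\<bar>"
      using M zin by (intro integral_diff_bound[OF cz _ _ tt(2) tt(1)]) auto
    moreover have "\<zeta> t - \<zeta> t' = integral {-h..t} (\<lambda>s. F (\<zeta> s)) - integral {-h..t'} (\<lambda>s. F (\<zeta> s))"
      by (subst zeq[OF tt(1)], subst zeq[OF tt(2)]) (simp add: \<Phi>_def)
    ultimately show "norm (\<zeta> t - \<zeta> t') \<le> M * \<bar>t - t'\<bar>" by simp
  qed
  ultimately show ?thesis using h0 M(1) by (intro exI[of _ h] conjI exI[of _ \<zeta>] exI[of _ M]) auto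
qed



lemma AE_scale:
  fixes Q :: "real \<Rightarrow> bool"
  assumes "r > 0" "AE v in lebesgue. Q v"
  shows "AE u in lebesgue. Q (u / r)"
proof -
  have "AE v in lborel. Q v" using assms(2) by (simp add: AE_completion_iff)
  then obtain N where N: "{v \<in> space lborel. \<not> Q v} \<subseteq> N" "emeasure lborel N = 0" "N \<in> sets lborel"
    by (rule AE_E)
  have "UNIV - N \<in> sets borel" using N(3) by (intro sets.Diff) auto
  then have m: "Measurable.pred borel (\<lambda>v::real. v \<notin> N)"
    unfolding pred_def by (simp add: set_diff_eq)
  have "AE v in lborel. v \<notin> N" using N(2,3) by (intro AE_not_in) (simp add: null_sets_def)
  then have "AE u in lborel. 0 + (1/r) * u \<notin> N" using AE_borel_affine[OF _ m, of "1/r" 0] assms(1) by simp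
  then have "AE u in lborel. u / r \<notin> N" by simp
  then have "AE u in lborel. Q (u / r)"
    by eventually_elim (use N(1) in auto)
  then show ?thesis by (simp add: AE_completion_iff)
qed

lemma AE_not_in_finite:
  fixes A :: "real set"
  assumes "finite A"
  shows "AE u in lebesgue. u \<notin> A"
proof -
  have "AE u in lborel. u \<notin> A"
    using assms by (intro AE_not_in countable_imp_null_set_lborel countable_finite)
  then show ?thesis by (simp add: AE_completion_iff)
qed

lemma ball_flow:
  fixes \<Omega> :: "'a::euclidean_space set" and X :: "nat \<Rightarrow> 'a \<Rightarrow> 'a" and d :: "nat \<Rightarrow> real^'v"
  assumes "finite L" "l \<in> L" "open \<Omega>" "smooth_on \<Omega> (X l)"
    and yB: "y \<in> cc_ball \<Omega> L X d x \<Delta>" and P: "dpow \<Delta> (d l) > 0" and p: "p \<ge> 0"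
  shows "\<exists>e>0. \<exists>\<sigma>. \<sigma> 0 = y \<and> (\<forall>t\<in>{-e..e}. \<sigma> t \<in> cc_ball \<Omega> L X d x \<Delta> \<and>
           (\<sigma> has_vector_derivative (p *\<^sub>R X l (\<sigma> t))) (at t within {-e..e}))"
proof -
  define Pl where "Pl = dpow \<Delta> (d l)"
  obtain a \<gamma> where y: "y \<in> \<Omega>" "admissible_coeffs L a" "ode_solution \<Omega> L X d x \<Delta> a \<gamma>" "\<gamma> 1 = y"
    using yB unfolding cc_ball_def by blast
  obtain s where s: "s < 1" "AE t in lebesgue. t \<in> {0..1} \<longrightarrow> (\<Sum>m\<in>L. \<bar>a m t\<bar>^2) \<le> s"
    using y(2) unfolding admissible_coeffs_def by blast
  have ameas: "\<forall>m\<in>L. a m \<in> borel_measurable lebesgue" using y(2) unfolding admissible_coeffs_def by blast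
  have g0: "\<gamma> 0 = x" and gO: "\<gamma> ` {0..1} \<subseteq> \<Omega>" and gac: "abs_cont_on 0 1 \<gamma>"
    and gder: "AE t in lebesgue. t \<in> {0..1} \<longrightarrow>
        (\<gamma> has_vector_derivative (\<Sum>m\<in>L. (a m t * dpow \<Delta> (d m)) *\<^sub>R X m (\<gamma> t))) (at t within {0..1})"
    using y(3) unfolding ode_solution_def by blast+
  obtain h \<zeta> M where fl: "h > 0" "0 \<le> M" "\<zeta> 0 = y"
    "\<forall>t\<in>{-h..h}. \<zeta> t \<in> \<Omega> \<and> (\<zeta> has_vector_derivative X l (\<zeta> t)) (at t within {-h..h})"
    "\<forall>t\<in>{-h..h}. \<forall>t'\<in>{-h..h}. norm (\<zeta> t - \<zeta> t') \<le> M * \<bar>t - t'\<bar>"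
    using local_flow[OF assms(3) y(1) assms(4)] by blast
  define s0 where "s0 = max s 0"
  define \<epsilon> where "\<epsilon> = (1 - s0) / 2"
  define r where "r = 1 - \<epsilon>"
  have s0: "0 \<le> s0" "s0 < 1" "s \<le> s0" using s(1) unfolding s0_def by auto
  have eps: "0 < \<epsilon>" "\<epsilon> \<le> 1/2" using s0 unfolding \<epsilon>_def by auto
  have r: "0 < r" "r < 1" "r + \<epsilon> = 1" using eps unfolding r_def by auto
  have s0r: "s0 < r^2"
  proof -
    have "r^2 = s0 + \<epsilon>^2" unfolding r_def \<epsilon>_def by (simp add: power2_eq_square field_simps)
    then show ?thesis using eps by simp
  qed
  define e where "e = min h (\<epsilon> * Pl / 2) / (p + 1)"
  have Pl: "Pl > 0" using P unfolding Pl_def .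
  have e0: "e > 0" unfolding e_def using fl(1) eps Pl p by simp
  have pe_h: "p * e < h"
  proof -
    have "p * e \<le> p * (h / (p + 1))" unfolding e_def using p fl(1)
      by (intro mult_left_mono divide_right_mono) auto
    also have "\<dots> < h" using p fl(1) by (simp add: field_simps)
    finally show ?thesis .
  qed
  have pe_k: "p * e / (\<epsilon> * Pl) < 1/2"
  proof -
    have "p * e \<le> p * ((\<epsilon> * Pl / 2) / (p + 1))" unfolding e_def using p eps Pl
      by (intro mult_left_mono divide_right_mono) auto
    also have "\<dots> < \<epsilon> * Pl / 2" using p eps Pl by (simp add: field_simps)
    finally show ?thesis using eps Pl by (simp add: field_simps)
  qed
  define \<sigma> where "\<sigma> t = \<zeta> (p * t)" for t
  have ph: "p * t \<in> {-h..h}" if "t \<in> {-e..e}" for t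
  proof -
    have "\<bar>p * t\<bar> \<le> p * e" using that p by (auto simp: abs_mult intro: mult_left_mono)
    then show ?thesis using pe_h by auto
  qed
  have "\<sigma> t \<in> cc_ball \<Omega> L X d x \<Delta>" if t: "t \<in> {-e..e}" for t
  proof -
    define c where "c = p * t / \<epsilon>"
    define k where "k = c / Pl"
    define a' where "a' m u = (if u \<le> r then a m (u / r) / r else if m = l then k else 0)" for m u
    define \<rho> where "\<rho> u = (if u \<le> r then \<gamma> (u / r) else \<zeta> (c * (u - r)))" for u
    have ce: "c * \<epsilon> = p * t" unfolding c_def using eps by simp
    have pt: "\<bar>p * t\<bar> \<le> p * e" using t p by (auto simp: abs_mult intro: mult_left_mono)
    have cu_le: "\<bar>c * (u - r)\<bar> \<le> p * e" if "u \<in> {r..1}" for u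
    proof -
      have "\<bar>c * (u - r)\<bar> = \<bar>c\<bar> * (u - r)" using that by (simp add: abs_mult)
      also have "\<dots> \<le> \<bar>c\<bar> * \<epsilon>" using that r(3) by (intro mult_left_mono) auto
      also have "\<dots> = \<bar>c * \<epsilon>\<bar>" using eps by (simp add: abs_mult)
      also have "\<dots> = \<bar>p * t\<bar>" using ce by simp
      finally show ?thesis using pt by simp
    qed
    have cu: "c * (u - r) \<in> {-h..h}" if "u \<in> {r..1}" for u
      using cu_le[OF that] pe_h by auto
    have cu_strict: "-h < c * (u - r) \<and> c * (u - r) < h" if "u \<in> {r..1}" for u
      using cu_le[OF that] pe_h by auto
    have k2: "k^2 \<le> 1/4"
    proof -
      have "\<bar>k\<bar> = \<bar>p * t\<bar> / (\<epsilon> * Pl)" unfolding k_def c_def using eps Pl by (simp add: abs_mult)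
      also have "\<dots> \<le> p * e / (\<epsilon> * Pl)" using pt eps Pl by (intro divide_right_mono) auto
      also have "\<dots> \<le> 1/2" using pe_k by simp
      finally have "\<bar>k\<bar> \<le> 1/2" .
      then have "\<bar>k\<bar>^2 \<le> (1/2)^2" by (intro power_mono) auto
      then show ?thesis by (simp add: power2_eq_square)
    qed
    have kP: "k * Pl = c" unfolding k_def using Pl by simp
    have meas: "a' m \<in> borel_measurable lebesgue" if m: "m \<in> L" for m
    proof -
      have "(\<lambda>u. a m ((1 / r) *\<^sub>R u)) \<in> borel_measurable lebesgue"
        using measurable_comp[OF lebesgue_measurable_scaling[of "1 / r"] ameas[rule_format, OF m]]
        by (simp add: comp_def)
      moreover have "(\<lambda>u. a m ((1 / r) *\<^sub>R u)) = (\<lambda>u. a m (u / r))" by (simp add: fun_eq_iff)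
      ultimately have m1: "(\<lambda>u. a m (u / r)) \<in> borel_measurable lebesgue" by simp
      have m2: "(\<lambda>u. a m (u / r) / r) \<in> borel_measurable lebesgue"
        using borel_measurable_divide[OF m1, of "\<lambda>_. r"] by simp
      have "{u::real. u \<le> r} \<in> sets lborel" by simp
      then have m3: "{u \<in> space lebesgue. u \<le> r} \<in> sets lebesgue"
        by (auto intro: sets_completionI_sets)
      show ?thesis unfolding a'_def
        by (rule measurable_If[OF m2 _ m3]) simp
    qed
    have AEa: "AE u in lebesgue. u / r \<in> {0..1} \<longrightarrow> (\<Sum>m\<in>L. \<bar>a m (u / r)\<bar>^2) \<le> s"
      by (rule AE_scale[OF r(1) s(2)])
    have "AE u in lebesgue. u \<in> {0..1} \<longrightarrow> (\<Sum>m\<in>L. \<bar>a' m u\<bar>^2) \<le> max (s0 / r^2) (1/4)"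
      using AEa
    proof eventually_elim
      case (elim u)
      show ?case
      proof (intro impI)
        assume u: "u \<in> {0..1}"
        show "(\<Sum>m\<in>L. \<bar>a' m u\<bar>^2) \<le> max (s0 / r^2) (1/4)"
        proof (cases "u \<le> r")
          case True
          then have ur: "u / r \<in> {0..1}" using u r by auto
          have "(\<Sum>m\<in>L. \<bar>a' m u\<bar>^2) = (\<Sum>m\<in>L. \<bar>a m (u / r)\<bar>^2) / r^2"
            unfolding a'_def using True by (simp add: sum_divide_distrib power_divide)
          also have "\<dots> \<le> s0 / r^2" using elim ur s0 by (intro divide_right_mono) auto
          finally show ?thesis by simp
        next
          case False
          have "(\<Sum>m\<in>L. \<bar>a' m u\<bar>^2) = (\<Sum>m\<in>L. if m = l then k^2 else 0)"
            unfolding a'_def using False by (intro sum.cong) auto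
          also have "\<dots> = k^2" using assms(1,2) by simp
          finally show ?thesis using k2 by simp
        qed
      qed
    qed
    moreover have "max (s0 / r^2) (1/4) < 1" using s0r r by (simp add: field_simps)
    ultimately have adm: "admissible_coeffs L a'"
      unfolding admissible_coeffs_def using meas by blast
    have rho_r: "\<rho> u = \<zeta> (c * (u - r))" if "u \<in> {r..1}" for u
    proof (cases "u = r")
      case True then show ?thesis unfolding \<rho>_def using r y(4) fl(3) by simp
    qed (use that in \<open>auto simp: \<rho>_def\<close>)
    have rho0: "\<rho> 0 = x" unfolding \<rho>_def using r g0 by simp
    have rhoO: "\<rho> ` {0..1} \<subseteq> \<Omega>"
    proof
      fix z assume "z \<in> \<rho> ` {0..1}"
      then obtain u where u: "u \<in> {0..1}" "z = \<rho> u" by blast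
      show "z \<in> \<Omega>"
      proof (cases "u \<le> r")
        case True
        then have "u / r \<in> {0..1}" using u r by auto
        then show ?thesis using u True gO unfolding \<rho>_def by auto
      next
        case False
        then have "u \<in> {r..1}" using u by auto
        then show ?thesis using u rho_r cu fl(4) by auto
      qed
    qed
    have ac1: "abs_cont_on 0 r \<rho>" by (rule abs_cont_scale[OF r(1) gac]) (auto simp: \<rho>_def)
    have ac2: "abs_cont_on r 1 \<rho>"
    proof (rule abs_cont_lipschitz[of "M * \<bar>c\<bar>"])
      show "0 \<le> M * \<bar>c\<bar>" using fl(2) by simp
      show "\<forall>u\<in>{r..1}. \<forall>v\<in>{r..1}. norm (\<rho> v - \<rho> u) \<le> M * \<bar>c\<bar> * \<bar>v - u\<bar>"
      proof (intro ballI)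
        fix u v assume uv: "u \<in> {r..1}" "v \<in> {r..1}"
        have "norm (\<rho> v - \<rho> u) \<le> M * \<bar>c * (v - r) - c * (u - r)\<bar>"
          using rho_r[OF uv(1)] rho_r[OF uv(2)] fl(5) cu[OF uv(1)] cu[OF uv(2)] by simp
        also have "\<bar>c * (v - r) - c * (u - r)\<bar> = \<bar>c\<bar> * \<bar>v - u\<bar>"
          by (simp add: abs_mult[symmetric] algebra_simps)
        finally show "norm (\<rho> v - \<rho> u) \<le> M * \<bar>c\<bar> * \<bar>v - u\<bar>" by (simp add: mult.assoc)
      qed
    qed
    have ac: "abs_cont_on 0 1 \<rho>" using abs_cont_glue[OF _ _ ac1 ac2] r by simp
    have AEg: "AE u in lebesgue. u / r \<in> {0..1} \<longrightarrow>
        (\<gamma> has_vector_derivative (\<Sum>m\<in>L. (a m (u / r) * dpow \<Delta> (d m)) *\<^sub>R X m (\<gamma> (u / r)))) (at (u / r) within {0..1})"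
      by (rule AE_scale[OF r(1) gder])
    have AEf: "AE u in lebesgue. u \<notin> {0, r, 1}" by (rule AE_not_in_finite) simp
    have "AE u in lebesgue. u \<in> {0..1} \<longrightarrow>
        (\<rho> has_vector_derivative (\<Sum>m\<in>L. (a' m u * dpow \<Delta> (d m)) *\<^sub>R X m (\<rho> u))) (at u within {0..1})"
      using AEg AEf
    proof eventually_elim
      case (elim u)
      show ?case
      proof
        assume u: "u \<in> {0..1}"
        have u': "0 < u" "u < 1" "u \<noteq> r" using u elim(2) by auto
        show "(\<rho> has_vector_derivative (\<Sum>m\<in>L. (a' m u * dpow \<Delta> (d m)) *\<^sub>R X m (\<rho> u))) (at u within {0..1})"
        proof (cases "u < r")
          case True
          have ur: "0 < u / r" "u / r < 1" using u' True r by (auto simp: field_simps)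
          let ?G = "\<Sum>m\<in>L. (a m (u / r) * dpow \<Delta> (d m)) *\<^sub>R X m (\<gamma> (u / r))"
          have "(\<gamma> has_vector_derivative ?G) (at (u / r) within {0..1})" using elim(1) ur by auto
          then have g1: "(\<gamma> has_vector_derivative ?G) (at (u / r))" using at_within_Icc_at[of 0 "u / r" 1] ur by simp
          have g2: "((\<lambda>u. u / r) has_vector_derivative (1 / r)) (at u)"
            using r(1) by (auto intro!: derivative_eq_intros simp: has_real_derivative_iff_has_vector_derivative[symmetric])
          have "((\<gamma> \<circ> (\<lambda>u. u / r)) has_vector_derivative (1 / r) *\<^sub>R ?G) (at u)"
            by (rule vector_diff_chain_at[OF g2 g1])
          then have "(\<rho> has_vector_derivative (1 / r) *\<^sub>R ?G) (at u)"
            by (rule has_vector_derivative_transform_within_open[of _ _ _ "{..<r}"]) (use True in \<open>auto simp: \<rho>_def\<close>)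
          then have "(\<rho> has_vector_derivative (1 / r) *\<^sub>R ?G) (at u within {0..1})"
            by (rule has_vector_derivative_at_within)
          moreover have "(1 / r) *\<^sub>R ?G = (\<Sum>m\<in>L. (a' m u * dpow \<Delta> (d m)) *\<^sub>R X m (\<rho> u))"
            unfolding scaleR_sum_right using True
            by (intro sum.cong) (auto simp: a'_def \<rho>_def)
          ultimately show ?thesis by simp
        next
          case False
          then have ur: "u \<in> {r..1}" "r < u" using u u' by auto
          let ?z = "c * (u - r)"
          have "(\<zeta> has_vector_derivative X l (\<zeta> ?z)) (at ?z within {-h..h})" using fl(4) cu[OF ur(1)] by blast
          then have g1: "(\<zeta> has_vector_derivative X l (\<zeta> ?z)) (at ?z)"
            using at_within_Icc_at[of "-h" ?z h] cu_strict[OF ur(1)] by simp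
          have g2: "((\<lambda>u. c * (u - r)) has_vector_derivative c) (at u)"
            by (auto intro!: derivative_eq_intros simp: has_real_derivative_iff_has_vector_derivative[symmetric])
          have "((\<zeta> \<circ> (\<lambda>u. c * (u - r))) has_vector_derivative c *\<^sub>R X l (\<zeta> ?z)) (at u)"
            by (rule vector_diff_chain_at[OF g2 g1])
          then have "(\<rho> has_vector_derivative c *\<^sub>R X l (\<zeta> ?z)) (at u)"
            by (rule has_vector_derivative_transform_within_open[of _ _ _ "{r<..}"]) (use ur in \<open>auto simp: \<rho>_def\<close>)
          then have "(\<rho> has_vector_derivative c *\<^sub>R X l (\<zeta> ?z)) (at u within {0..1})"
            by (rule has_vector_derivative_at_within)
          moreover have "(\<Sum>m\<in>L. (a' m u * dpow \<Delta> (d m)) *\<^sub>R X m (\<rho> u)) =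
              (\<Sum>m\<in>L. if m = l then c *\<^sub>R X l (\<zeta> ?z) else 0)"
            using ur kP unfolding Pl_def by (intro sum.cong) (auto simp: a'_def \<rho>_def)
          moreover have "(\<Sum>m\<in>L. if m = l then c *\<^sub>R X l (\<zeta> ?z) else 0) = c *\<^sub>R X l (\<zeta> ?z)"
            using assms(1,2) by simp
          ultimately show ?thesis by simp
        qed
      qed
    qed
    then have ode: "ode_solution \<Omega> L X d x \<Delta> a' \<rho>"
      unfolding ode_solution_def using rho0 rhoO ac by blast
    have "1 - r = \<epsilon>" using r(3) by simp
    then have "c * (1 - r) = p * t" using ce by simp
    then have "\<rho> 1 = \<sigma> t"
      using rho_r[of 1] r unfolding \<sigma>_def by simp
    moreover have "\<sigma> t \<in> \<Omega>" using fl(4) ph[OF t] unfolding \<sigma>_def by blast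
    ultimately show ?thesis unfolding cc_ball_def using adm ode by blast
  qed
  moreover have "(\<sigma> has_vector_derivative (p *\<^sub>R X l (\<sigma> t))) (at t within {-e..e})" if t: "t \<in> {-e..e}" for t
  proof -
    have d1: "((\<lambda>t. p * t) has_vector_derivative p) (at t within {-e..e})"
      by (auto intro!: derivative_eq_intros simp: has_real_derivative_iff_has_vector_derivative[symmetric])
    have "(\<zeta> has_vector_derivative X l (\<zeta> (p * t))) (at (p * t) within {-h..h})" using fl(4) ph[OF t] by blast
    then have d2: "(\<zeta> has_vector_derivative X l (\<zeta> (p * t))) (at (p * t) within (\<lambda>t. p * t) ` {-e..e})"
      by (rule has_vector_derivative_within_subset) (use ph in auto)
    have "((\<zeta> \<circ> (\<lambda>t. p * t)) has_vector_derivative p *\<^sub>R X l (\<zeta> (p * t))) (at t within {-e..e})"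
      by (rule vector_diff_chain_within[OF d1 d2])
    then show ?thesis unfolding \<sigma>_def comp_def .
  qed
  moreover have "\<sigma> 0 = y" unfolding \<sigma>_def using fl(3) by simp
  ultimately show ?thesis using e0 by blast
qed



definition fam :: "'a::real_normed_vector set \<Rightarrow> nat set \<Rightarrow> (nat \<Rightarrow> 'a \<Rightarrow> 'a) \<Rightarrow> (nat list \<Rightarrow> 'a \<Rightarrow> real) \<Rightarrow> nat \<Rightarrow> bool" where
  "fam V L Y D m \<longleftrightarrow>
     (\<forall>\<beta> l. set \<beta> \<subseteq> L \<and> l \<in> L \<and> length \<beta> < m \<longrightarrow> lie_deriv_on V (Y l) (D \<beta>) (D (l # \<beta>))) \<and>
     (\<forall>\<beta>. set \<beta> \<subseteq> L \<and> length \<beta> \<le> m \<longrightarrow> continuous_on V (D \<beta>))"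

definition fb :: "'a::real_normed_vector set \<Rightarrow> nat set \<Rightarrow> (nat \<Rightarrow> 'a \<Rightarrow> 'a) \<Rightarrow> (nat list \<Rightarrow> 'a \<Rightarrow> real) \<Rightarrow> nat \<Rightarrow> real \<Rightarrow> bool" where
  "fb V L Y D m K \<longleftrightarrow> fam V L Y D m \<and> (\<forall>\<beta>. set \<beta> \<subseteq> L \<and> length \<beta> \<le> m \<longrightarrow> (\<forall>y\<in>V. \<bar>D \<beta> y\<bar> \<le> K))"

lemma vf_derivs_fam: "vf_derivs V L Y g D m \<longleftrightarrow> (\<forall>y\<in>V. D [] y = g y) \<and> fam V L Y D m"
  unfolding vf_derivs_def fam_def by blast

subsection \<open>Lie derivatives along curves\<close>

lemma ld_subset: "V' \<subseteq> V \<Longrightarrow> lie_deriv_on V Y g h \<Longrightarrow> lie_deriv_on V' Y g h"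
  unfolding lie_deriv_on_def by (meson subsetD)

lemma ld_add:
  assumes "lie_deriv_on V Y f f'" "lie_deriv_on V Y g g'"
  shows "lie_deriv_on V Y (\<lambda>y. f y + g y) (\<lambda>y. f' y + g' y)"
  unfolding lie_deriv_on_def
proof (intro ballI allI impI)
  fix y \<gamma> e assume y: "y \<in> V" and h: "e > 0 \<and> \<gamma> 0 = y \<and>
      (\<forall>t\<in>{-e..e}. \<gamma> t \<in> V \<and> (\<gamma> has_vector_derivative Y (\<gamma> t)) (at t within {-e..e}))"
  have "((f \<circ> \<gamma>) has_real_derivative f' y) (at 0 within {-e..e})"
    using assms(1) y h unfolding lie_deriv_on_def by blast
  moreover have "((g \<circ> \<gamma>) has_real_derivative g' y) (at 0 within {-e..e})"
    using assms(2) y h unfolding lie_deriv_on_def by blast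
  ultimately show "((\<lambda>y. f y + g y) \<circ> \<gamma> has_real_derivative f' y + g' y) (at 0 within {-e..e})"
    unfolding comp_def by (rule DERIV_add)
qed

lemma ld_minus:
  assumes "lie_deriv_on V Y f f'"
  shows "lie_deriv_on V Y (\<lambda>y. - f y) (\<lambda>y. - f' y)"
  unfolding lie_deriv_on_def
proof (intro ballI allI impI)
  fix y \<gamma> e assume y: "y \<in> V" and h: "e > 0 \<and> \<gamma> 0 = y \<and>
      (\<forall>t\<in>{-e..e}. \<gamma> t \<in> V \<and> (\<gamma> has_vector_derivative Y (\<gamma> t)) (at t within {-e..e}))"
  have "((f \<circ> \<gamma>) has_real_derivative f' y) (at 0 within {-e..e})"
    using assms(1) y h unfolding lie_deriv_on_def by blast
  then show "((\<lambda>y. - f y) \<circ> \<gamma> has_real_derivative - f' y) (at 0 within {-e..e})"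
    unfolding comp_def by (rule DERIV_minus)
qed

lemma ld_mult:
  assumes "lie_deriv_on V Y f f'" "lie_deriv_on V Y g g'"
  shows "lie_deriv_on V Y (\<lambda>y. f y * g y) (\<lambda>y. f' y * g y + f y * g' y)"
  unfolding lie_deriv_on_def
proof (intro ballI allI impI)
  fix y \<gamma> e assume y: "y \<in> V" and h: "e > 0 \<and> \<gamma> 0 = y \<and>
      (\<forall>t\<in>{-e..e}. \<gamma> t \<in> V \<and> (\<gamma> has_vector_derivative Y (\<gamma> t)) (at t within {-e..e}))"
  have "((f \<circ> \<gamma>) has_real_derivative f' y) (at 0 within {-e..e})"
    using assms(1) y h unfolding lie_deriv_on_def by blast
  moreover have "((g \<circ> \<gamma>) has_real_derivative g' y) (at 0 within {-e..e})"
    using assms(2) y h unfolding lie_deriv_on_def by blast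
  ultimately have "((\<lambda>t. (f \<circ> \<gamma>) t * (g \<circ> \<gamma>) t) has_real_derivative (f \<circ> \<gamma>) 0 * g' y + f' y * (g \<circ> \<gamma>) 0) (at 0 within {-e..e})"
    by (rule DERIV_mult')
  then show "((\<lambda>y. f y * g y) \<circ> \<gamma> has_real_derivative f' y * g y + f y * g' y) (at 0 within {-e..e})"
    using h by (simp add: comp_def algebra_simps)
qed

lemma ld_zero: "lie_deriv_on V Y (\<lambda>y. 0) (\<lambda>y. 0)"
  unfolding lie_deriv_on_def comp_def by auto

lemma ld_sum:
  assumes "finite I" "\<forall>i\<in>I. lie_deriv_on V Y (f i) (g i)"
  shows "lie_deriv_on V Y (\<lambda>y. \<Sum>i\<in>I. f i y) (\<lambda>y. \<Sum>i\<in>I. g i y)"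
  using assms
proof (induction I rule: finite_induct)
  case empty then show ?case by (simp add: ld_zero)
next
  case (insert x F)
  then show ?case using ld_add[of V Y "f x" "g x" "\<lambda>y. \<Sum>i\<in>F. f i y" "\<lambda>y. \<Sum>i\<in>F. g i y"] by simp
qed

lemma ld_sum_list:
  assumes "\<forall>p\<in>set xs. lie_deriv_on V Y (f p) (g p)"
  shows "lie_deriv_on V Y (\<lambda>y. \<Sum>p\<leftarrow>xs. f p y) (\<lambda>y. \<Sum>p\<leftarrow>xs. g p y)"
  using assms
proof (induction xs)
  case Nil then show ?case by (simp add: ld_zero)
next
  case (Cons a xs)
  then show ?case using ld_add[of V Y "f a" "g a" "\<lambda>y. \<Sum>p\<leftarrow>xs. f p y" "\<lambda>y. \<Sum>p\<leftarrow>xs. g p y"] by simp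
qed

lemma cont_sum_list:
  assumes "\<forall>p\<in>set xs. continuous_on V (f p)"
  shows "continuous_on V (\<lambda>y. \<Sum>p\<leftarrow>xs. (f p y :: real))"
  using assms by (induction xs) (auto intro!: continuous_intros)

subsection \<open>Products via splittings of words\<close>

fun splits :: "'b list \<Rightarrow> ('b list \<times> 'b list) list" where
  "splits [] = [([], [])]"
| "splits (l # \<beta>) = map (\<lambda>(a, b). (l # a, b)) (splits \<beta>) @ map (\<lambda>(a, b). (a, l # b)) (splits \<beta>)"

lemma splits_set: "(a, b) \<in> set (splits \<beta>) \<Longrightarrow> set a \<subseteq> set \<beta> \<and> set b \<subseteq> set \<beta> \<and> length a \<le> length \<beta> \<and> length b \<le> length \<beta>"
proof (induction \<beta> arbitrary: a b)
  case (Cons l \<beta>)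
  from Cons.prems obtain a' b' where ab: "(a', b') \<in> set (splits \<beta>)"
    "(a = l # a' \<and> b = b') \<or> (a = a' \<and> b = l # b')" by auto
  then show ?case using Cons.IH[OF ab(1)] by (elim disjE) auto
qed simp

lemma splits_length: "length (splits \<beta>) = 2 ^ length \<beta>"
  by (induction \<beta>) auto

definition mprod :: "(nat list \<Rightarrow> 'a \<Rightarrow> real) \<Rightarrow> (nat list \<Rightarrow> 'a \<Rightarrow> real) \<Rightarrow> nat list \<Rightarrow> 'a \<Rightarrow> real" where
  "mprod F G \<beta> y = (\<Sum>p\<leftarrow>splits \<beta>. F (fst p) y * G (snd p) y)"

lemma mprod_Nil: "mprod F G [] y = F [] y * G [] y"
  unfolding mprod_def by simp

lemma mprod_Cons: "mprod F G (l # \<beta>) y = (\<Sum>p\<leftarrow>splits \<beta>. F (l # fst p) y * G (snd p) y + F (fst p) y * G (l # snd p) y)"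
  unfolding mprod_def by (simp add: comp_def case_prod_beta sum_list_addf)

lemma fam_subset: "V' \<subseteq> V \<Longrightarrow> fam V L Y D m \<Longrightarrow> fam V' L Y D m"
  unfolding fam_def by (meson continuous_on_subset ld_subset)

lemma fb_subset: "V' \<subseteq> V \<Longrightarrow> fb V L Y D m K \<Longrightarrow> fb V' L Y D m K"
  unfolding fb_def using fam_subset by blast

lemma fam_add: "fam V L Y F m \<Longrightarrow> fam V L Y G m \<Longrightarrow> fam V L Y (\<lambda>\<beta> y. F \<beta> y + G \<beta> y) m"
  unfolding fam_def by (auto intro!: ld_add continuous_intros)

lemma fb_add: "fb V L Y F m K1 \<Longrightarrow> fb V L Y G m K2 \<Longrightarrow> fb V L Y (\<lambda>\<beta> y. F \<beta> y + G \<beta> y) m (K1 + K2)"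
  unfolding fb_def
proof (intro conjI allI impI ballI)
  assume a: "fam V L Y F m \<and> (\<forall>\<beta>. set \<beta> \<subseteq> L \<and> length \<beta> \<le> m \<longrightarrow> (\<forall>y\<in>V. \<bar>F \<beta> y\<bar> \<le> K1))"
     "fam V L Y G m \<and> (\<forall>\<beta>. set \<beta> \<subseteq> L \<and> length \<beta> \<le> m \<longrightarrow> (\<forall>y\<in>V. \<bar>G \<beta> y\<bar> \<le> K2))"
  then show "fam V L Y (\<lambda>\<beta> y. F \<beta> y + G \<beta> y) m" using fam_add by blast
  fix \<beta> y assume "set \<beta> \<subseteq> L \<and> length \<beta> \<le> m" "y \<in> V"
  then have "\<bar>F \<beta> y\<bar> \<le> K1" "\<bar>G \<beta> y\<bar> \<le> K2" using a by blast+
  then show "\<bar>F \<beta> y + G \<beta> y\<bar> \<le> K1 + K2" by linarith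
qed

lemma fam_minus: "fam V L Y F m \<Longrightarrow> fam V L Y (\<lambda>\<beta> y. - F \<beta> y) m"
  unfolding fam_def by (auto intro!: ld_minus continuous_intros)

lemma fb_minus: "fb V L Y F m K \<Longrightarrow> fb V L Y (\<lambda>\<beta> y. - F \<beta> y) m K"
  using fam_minus[of V L Y F m] by (auto simp: fb_def)

lemma fam_zero: "fam V L Y (\<lambda>\<beta> y. 0) m"
  unfolding fam_def by (auto simp: ld_zero)

lemma fb_sum:
  assumes "finite I" "\<forall>i\<in>I. fb V L Y (F i) m (K i)"
  shows "fb V L Y (\<lambda>\<beta> y. \<Sum>i\<in>I. F i \<beta> y) m (\<Sum>i\<in>I. K i)"
  using assms
proof (induction I rule: finite_induct)
  case empty then show ?case by (simp add: fb_def fam_zero)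
next
  case (insert x I)
  then show ?case using fb_add[of V L Y "F x" m "K x" "\<lambda>\<beta> y. \<Sum>i\<in>I. F i \<beta> y" "\<Sum>i\<in>I. K i"] by simp
qed

lemma fam_shift: "l \<in> L \<Longrightarrow> fam V L Y F (Suc m) \<Longrightarrow> fam V L Y (\<lambda>\<beta>. F (\<beta> @ [l])) m"
proof -
  assume l: "l \<in> L" and f: "fam V L Y F (Suc m)"
  show ?thesis unfolding fam_def
  proof (intro conjI allI impI)
    fix \<beta> la assume h: "set \<beta> \<subseteq> L \<and> la \<in> L \<and> length \<beta> < m"
    then have "set (\<beta> @ [l]) \<subseteq> L \<and> la \<in> L \<and> length (\<beta> @ [l]) < Suc m" using l by auto
    then have "lie_deriv_on V (Y la) (F (\<beta> @ [l])) (F (la # (\<beta> @ [l])))" using f unfolding fam_def by blast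
    then show "lie_deriv_on V (Y la) (F (\<beta> @ [l])) (F ((la # \<beta>) @ [l]))" by simp
  next
    fix \<beta> assume h: "set \<beta> \<subseteq> L \<and> length \<beta> \<le> m"
    then have "set (\<beta> @ [l]) \<subseteq> L \<and> length (\<beta> @ [l]) \<le> Suc m" using l by auto
    then show "continuous_on V (F (\<beta> @ [l]))" using f unfolding fam_def by blast
  qed
qed

lemma fb_shift: "l \<in> L \<Longrightarrow> fb V L Y F (Suc m) K \<Longrightarrow> fb V L Y (\<lambda>\<beta>. F (\<beta> @ [l])) m K"
  unfolding fb_def using fam_shift by auto

lemma fam_mprod:
  assumes "fam V L Y F m" "fam V L Y G m"
  shows "fam V L Y (mprod F G) m"
  unfolding fam_def
proof (intro conjI allI impI)
  fix \<beta> l assume h: "set \<beta> \<subseteq> L \<and> l \<in> L \<and> length \<beta> < m"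
  have e1: "mprod F G \<beta> = (\<lambda>y. \<Sum>p\<leftarrow>splits \<beta>. F (fst p) y * G (snd p) y)" by (simp add: fun_eq_iff mprod_def)
  have e2: "mprod F G (l # \<beta>) = (\<lambda>y. \<Sum>p\<leftarrow>splits \<beta>. F (l # fst p) y * G (snd p) y + F (fst p) y * G (l # snd p) y)"
    by (simp add: fun_eq_iff mprod_Cons)
  show "lie_deriv_on V (Y l) (mprod F G \<beta>) (mprod F G (l # \<beta>))"
    unfolding e1 e2
  proof (rule ld_sum_list[where f = "\<lambda>p y. F (fst p) y * G (snd p) y"], intro ballI)
    fix p assume p: "p \<in> set (splits \<beta>)"
    then have "set (fst p) \<subseteq> L \<and> length (fst p) < m \<and> set (snd p) \<subseteq> L \<and> length (snd p) < m"
      using splits_set[of "fst p" "snd p" \<beta>] h by auto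
    then have "lie_deriv_on V (Y l) (F (fst p)) (F (l # fst p))" "lie_deriv_on V (Y l) (G (snd p)) (G (l # snd p))"
      using assms h unfolding fam_def by blast+
    then show "lie_deriv_on V (Y l) (\<lambda>y. F (fst p) y * G (snd p) y)
        (\<lambda>y. F (l # fst p) y * G (snd p) y + F (fst p) y * G (l # snd p) y)"
      by (rule ld_mult)
  qed
next
  fix \<beta> assume h: "set \<beta> \<subseteq> L \<and> length \<beta> \<le> m"
  have e1: "mprod F G \<beta> = (\<lambda>y. \<Sum>p\<leftarrow>splits \<beta>. F (fst p) y * G (snd p) y)" by (simp add: fun_eq_iff mprod_def)
  show "continuous_on V (mprod F G \<beta>)"
    unfolding e1
  proof (rule cont_sum_list[where f = "\<lambda>p y. F (fst p) y * G (snd p) y"], intro ballI)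
    fix p assume p: "p \<in> set (splits \<beta>)"
    then have "set (fst p) \<subseteq> L \<and> length (fst p) \<le> m \<and> set (snd p) \<subseteq> L \<and> length (snd p) \<le> m"
      using splits_set[of "fst p" "snd p" \<beta>] h by auto
    then show "continuous_on V (\<lambda>y. F (fst p) y * G (snd p) y)"
      using assms unfolding fam_def by (auto intro!: continuous_intros)
  qed
qed

lemma fb_mprod:
  assumes "fb V L Y F m K1" "fb V L Y G m K2"
  shows "fb V L Y (mprod F G) m (2 ^ m * (K1 * K2))"
  unfolding fb_def
proof (intro conjI allI impI ballI)
  show "fam V L Y (mprod F G) m" using assms fam_mprod unfolding fb_def by blast
next
  fix \<beta> y assume h: "set \<beta> \<subseteq> L \<and> length \<beta> \<le> m" and y: "y \<in> V"
  have bF: "\<bar>F a y\<bar> \<le> K1" if "set a \<subseteq> L" "length a \<le> m" for a using assms(1) that y unfolding fb_def by blast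
  have bG: "\<bar>G a y\<bar> \<le> K2" if "set a \<subseteq> L" "length a \<le> m" for a using assms(2) that y unfolding fb_def by blast
  have K2: "0 \<le> K2" using bG[of "[]"] by simp
  have K1: "0 \<le> K1" using bF[of "[]"] by simp
  have "\<bar>mprod F G \<beta> y\<bar> \<le> (\<Sum>p\<leftarrow>splits \<beta>. \<bar>F (fst p) y * G (snd p) y\<bar>)"
    unfolding mprod_def using sum_list_abs[of "map (\<lambda>p. F (fst p) y * G (snd p) y) (splits \<beta>)"]
    by (simp add: comp_def)
  also have "\<dots> \<le> (\<Sum>p\<leftarrow>splits \<beta>. K1 * K2)"
  proof (rule sum_list_mono)
    fix p assume p: "p \<in> set (splits \<beta>)"
    then have "set (fst p) \<subseteq> L \<and> length (fst p) \<le> m \<and> set (snd p) \<subseteq> L \<and> length (snd p) \<le> m"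
      using splits_set[of "fst p" "snd p" \<beta>] h by auto
    then show "\<bar>F (fst p) y * G (snd p) y\<bar> \<le> K1 * K2"
      unfolding abs_mult using bF bG K1 by (intro mult_mono) auto
  qed
  also have "\<dots> = 2 ^ length \<beta> * (K1 * K2)" by (simp add: sum_list_triv splits_length)
  also have "\<dots> \<le> 2 ^ m * (K1 * K2)"
  proof (rule mult_right_mono)
    show "(2::real) ^ length \<beta> \<le> 2 ^ m" using h by (intro power_increasing) auto
    show "0 \<le> K1 * K2" using bF[of "[]"] K2 by simp
  qed
  finally show "\<bar>mprod F G \<beta> y\<bar> \<le> 2 ^ m * (K1 * K2)" .
qed

lemma supsum_fb:
  assumes "finite L" "vf_derivs V L Y g D m"
    and "(\<Sum>\<beta>\<in>{\<beta>. set \<beta> \<subseteq> L \<and> length \<beta> \<le> m}. (SUP y\<in>V. ereal \<bar>D \<beta> y\<bar>)) \<le> ereal C"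
  shows "fb V L Y D m C"
  unfolding fb_def
proof (intro conjI allI impI ballI)
  show "fam V L Y D m" using assms(2) vf_derivs_fam by blast
next
  fix \<beta> y assume h: "set \<beta> \<subseteq> L \<and> length \<beta> \<le> m" and y: "y \<in> V"
  let ?W = "{\<beta>. set \<beta> \<subseteq> L \<and> length \<beta> \<le> m}"
  have fin: "finite ?W" using finite_lists_length_le[OF assms(1)] by simp
  have nn: "\<forall>b\<in>?W - {\<beta>}. 0 \<le> (SUP y\<in>V. ereal \<bar>D b y\<bar>)"
  proof
    fix b assume "b \<in> ?W - {\<beta>}"
    have "ereal \<bar>D b y\<bar> \<le> (SUP y\<in>V. ereal \<bar>D b y\<bar>)" using y by (rule SUP_upper)
    then show "0 \<le> (SUP y\<in>V. ereal \<bar>D b y\<bar>)" by (rule order_trans[rotated]) simp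
  qed
  have "ereal \<bar>D \<beta> y\<bar> \<le> (SUP y\<in>V. ereal \<bar>D \<beta> y\<bar>)" using y by (rule SUP_upper)
  also have "\<dots> \<le> (\<Sum>b\<in>?W. (SUP y\<in>V. ereal \<bar>D b y\<bar>))"
  proof -
    have "(\<Sum>b\<in>?W. (SUP y\<in>V. ereal \<bar>D b y\<bar>)) = (SUP y\<in>V. ereal \<bar>D \<beta> y\<bar>) + (\<Sum>b\<in>?W - {\<beta>}. (SUP y\<in>V. ereal \<bar>D b y\<bar>))"
      using h fin by (intro sum.remove) auto
    moreover have "0 \<le> (\<Sum>b\<in>?W - {\<beta>}. (SUP y\<in>V. ereal \<bar>D b y\<bar>))" using nn by (intro sum_nonneg) auto
    ultimately show ?thesis by (simp add: add_increasing2)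
  qed
  also have "\<dots> \<le> ereal C" by (rule assms(3))
  finally show "\<bar>D \<beta> y\<bar> \<le> C" by simp
qed

lemma fb_supsum:
  assumes "fb V L Y D m K"
  shows "(\<Sum>\<beta>\<in>{\<beta>. set \<beta> \<subseteq> L \<and> length \<beta> \<le> m}. (SUP y\<in>V. ereal \<bar>D \<beta> y\<bar>))
      \<le> ereal (real (card {\<beta>. set \<beta> \<subseteq> L \<and> length \<beta> \<le> m}) * K)"
proof -
  let ?W = "{\<beta>. set \<beta> \<subseteq> L \<and> length \<beta> \<le> m}"
  have "(\<Sum>\<beta>\<in>?W. (SUP y\<in>V. ereal \<bar>D \<beta> y\<bar>)) \<le> (\<Sum>\<beta>\<in>?W. ereal K)"
  proof (rule sum_mono)
    fix \<beta> assume "\<beta> \<in> ?W"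
    then show "(SUP y\<in>V. ereal \<bar>D \<beta> y\<bar>) \<le> ereal K"
      using assms unfolding fb_def by (intro SUP_least) auto
  qed
  also have "\<dots> = ereal (real (card ?W) * K)" by (simp add: sum_ereal)
  finally show ?thesis .
qed



definition curves :: "'a::real_normed_vector set \<Rightarrow> nat set \<Rightarrow> (nat \<Rightarrow> 'a \<Rightarrow> 'a) \<Rightarrow> bool" where
  "curves V L Y \<longleftrightarrow> (\<forall>y\<in>V. \<forall>l\<in>L. \<exists>e>0. \<exists>\<sigma>. \<sigma> 0 = y \<and>
      (\<forall>t\<in>{-e..e}. \<sigma> t \<in> V \<and> (\<sigma> has_vector_derivative Y l (\<sigma> t)) (at t within {-e..e})))"

lemma vderiv_unique_curve:
  fixes f g :: "real \<Rightarrow> 'b::real_normed_vector"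
  assumes "e > 0" "(f has_vector_derivative a) (at 0 within {-e..e})" "(g has_vector_derivative b) (at 0 within {-e..e})"
    "\<forall>t\<in>{-e..e}. f t = g t"
  shows "a = b"
proof -
  have z: "(0::real) \<in> {-e..e}" using assms(1) by simp
  have "(g has_vector_derivative a) (at 0 within {-e..e})"
    by (rule has_vector_derivative_transform[OF z _ assms(2)]) (use assms(4) in auto)
  then show ?thesis
    using vector_derivative_unique_within_closed_interval[of "-e" e 0 g a b] assms(1,3)
    by (simp add: cbox_interval)
qed

lemma ld_unique:
  assumes "curves V L Y" "l \<in> L" "lie_deriv_on V (Y l) g h1" "lie_deriv_on V (Y l) g' h2"
    "\<forall>y\<in>V. g y = g' y" "y \<in> V"
  shows "h1 y = h2 y"
proof -
  obtain e \<sigma> where s: "e > 0" "\<sigma> 0 = y"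
    "\<forall>t\<in>{-e..e}. \<sigma> t \<in> V \<and> (\<sigma> has_vector_derivative Y l (\<sigma> t)) (at t within {-e..e})"
    using assms(1,2,6) unfolding curves_def by blast
  have "((g \<circ> \<sigma>) has_real_derivative h1 y) (at 0 within {-e..e})"
    using assms(3,6) s unfolding lie_deriv_on_def by blast
  moreover have "((g' \<circ> \<sigma>) has_real_derivative h2 y) (at 0 within {-e..e})"
    using assms(4,6) s unfolding lie_deriv_on_def by blast
  ultimately show ?thesis
    using vderiv_unique_curve[OF s(1), of "g \<circ> \<sigma>" "h1 y" "g' \<circ> \<sigma>" "h2 y"] s(3) assms(5)
    by (auto simp: has_real_derivative_iff_has_vector_derivative)
qed

lemma fam_unique:
  assumes "curves V L Y" "fam V L Y F m1" "fam V L Y G m2" "\<forall>y\<in>V. F [] y = G [] y"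
  shows "set \<beta> \<subseteq> L \<Longrightarrow> length \<beta> \<le> m1 \<Longrightarrow> length \<beta> \<le> m2 \<Longrightarrow> \<forall>y\<in>V. F \<beta> y = G \<beta> y"
proof (induction \<beta>)
  case Nil then show ?case using assms(4) by simp
next
  case (Cons l \<beta>)
  then have IH: "\<forall>y\<in>V. F \<beta> y = G \<beta> y" by simp
  have "lie_deriv_on V (Y l) (F \<beta>) (F (l # \<beta>))" using assms(2) Cons.prems unfolding fam_def by auto
  moreover have "lie_deriv_on V (Y l) (G \<beta>) (G (l # \<beta>))" using assms(3) Cons.prems unfolding fam_def by auto
  ultimately show ?case using ld_unique[OF assms(1)] IH Cons.prems by auto
qed

lemma vd_chain:
  assumes "(\<sigma> has_vector_derivative v) (at t within S)" "(Z has_derivative Z') (at (\<sigma> t))"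
  shows "((\<lambda>s. Z (\<sigma> s)) has_vector_derivative Z' v) (at t within S)"
proof -
  have lin: "linear Z'" using assms(2) has_derivative_bounded_linear bounded_linear.linear by blast
  have "((\<lambda>s. Z (\<sigma> s)) has_derivative (\<lambda>x. Z' (x *\<^sub>R v))) (at t within S)"
    using has_derivative_compose[OF assms(1)[unfolded has_vector_derivative_def] assms(2)] .
  moreover have "(\<lambda>x. Z' (x *\<^sub>R v)) = (\<lambda>x. x *\<^sub>R Z' v)" using lin by (simp add: fun_eq_iff linear_scale)
  ultimately show ?thesis unfolding has_vector_derivative_def by simp
qed

lemma dir_deriv:
  fixes X :: "nat \<Rightarrow> 'a::euclidean_space \<Rightarrow> 'a" and Z :: "'a \<Rightarrow> 'a"
  assumes "curves V L Y" "l \<in> L" "y \<in> V"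
    and "Z differentiable at y" "\<forall>k\<in>L. X k differentiable at y"
    and "\<forall>z\<in>V. Q *\<^sub>R Z z = (\<Sum>k\<in>L. (c k z * p k) *\<^sub>R X k z)"
    and "\<forall>k\<in>L. lie_deriv_on V (Y l) (c k) (Dc k)"
  shows "Q *\<^sub>R frechet_derivative Z (at y) (Y l y) =
    (\<Sum>k\<in>L. (c k y * p k) *\<^sub>R frechet_derivative (X k) (at y) (Y l y) + (Dc k y * p k) *\<^sub>R X k y)"
proof -
  obtain e \<sigma> where s: "e > 0" "\<sigma> 0 = y"
    "\<forall>t\<in>{-e..e}. \<sigma> t \<in> V \<and> (\<sigma> has_vector_derivative Y l (\<sigma> t)) (at t within {-e..e})"
    using assms(1,2,3) unfolding curves_def by blast
  have s0: "(\<sigma> has_vector_derivative Y l y) (at 0 within {-e..e})" using s by auto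
  have "((\<lambda>t. Z (\<sigma> t)) has_vector_derivative frechet_derivative Z (at y) (Y l y)) (at 0 within {-e..e})"
    by (rule vd_chain[OF s0]) (use assms(4) s(2) frechet_derivative_works in auto)
  then have f1: "((\<lambda>t. Q *\<^sub>R Z (\<sigma> t)) has_vector_derivative Q *\<^sub>R frechet_derivative Z (at y) (Y l y)) (at 0 within {-e..e})"
    using has_vector_derivative_scaleR[OF DERIV_const[of Q]] by simp
  have f2: "((\<lambda>t. \<Sum>k\<in>L. (c k (\<sigma> t) * p k) *\<^sub>R X k (\<sigma> t)) has_vector_derivative
      (\<Sum>k\<in>L. (c k y * p k) *\<^sub>R frechet_derivative (X k) (at y) (Y l y) + (Dc k y * p k) *\<^sub>R X k y)) (at 0 within {-e..e})"
  proof (rule has_vector_derivative_sum)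
    fix k assume k: "k \<in> L"
    have "((c k \<circ> \<sigma>) has_real_derivative Dc k y) (at 0 within {-e..e})"
      using assms(7) k assms(3) s unfolding lie_deriv_on_def by blast
    then have d1: "((\<lambda>t. c k (\<sigma> t) * p k) has_real_derivative Dc k y * p k) (at 0 within {-e..e})"
      unfolding comp_def by (rule DERIV_cmult_right)
    have d2: "((\<lambda>t. X k (\<sigma> t)) has_vector_derivative frechet_derivative (X k) (at y) (Y l y)) (at 0 within {-e..e})"
      by (rule vd_chain[OF s0]) (use assms(5) k s(2) frechet_derivative_works in auto)
    show "((\<lambda>t. (c k (\<sigma> t) * p k) *\<^sub>R X k (\<sigma> t)) has_vector_derivative
        (c k y * p k) *\<^sub>R frechet_derivative (X k) (at y) (Y l y) + (Dc k y * p k) *\<^sub>R X k y) (at 0 within {-e..e})"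
      using has_vector_derivative_scaleR[OF d1 d2] s(2) by simp
  qed
  show ?thesis
    by (rule vderiv_unique_curve[OF s(1) f1 f2]) (use s(3) assms(6) in auto)
qed

lemma linear_sum_scale:
  assumes "linear T" "finite L"
  shows "T (\<Sum>l\<in>L. a l *\<^sub>R v l) = (\<Sum>l\<in>L. a l *\<^sub>R T (v l))"
  using assms by (simp add: linear_sum linear_scale)

lemma comb3:
  "(\<Sum>j\<in>L. (a j * p j) *\<^sub>R v j) - (\<Sum>j\<in>L. (b j * p j) *\<^sub>R v j) + (\<Sum>j\<in>L. (c j * p j) *\<^sub>R v j) =
   (\<Sum>j\<in>L. ((a j - b j + c j) * p j) *\<^sub>R (v j :: 'a::real_vector))"
  by (simp add: sum_subtractf[symmetric] sum.distrib[symmetric] algebra_simps)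

lemma bracket_identity:
  fixes X :: "nat \<Rightarrow> 'a::euclidean_space \<Rightarrow> 'a"
  assumes fin: "finite L" and cur: "curves V L (\<lambda>j z. p j *\<^sub>R X j z)" and y: "y \<in> V"
    and diff: "\<forall>i\<in>insert i0 (insert i1 L). X i differentiable at y"
    and h0: "\<forall>z\<in>V. P0 *\<^sub>R X i0 z = (\<Sum>l\<in>L. (c l z * p l) *\<^sub>R X l z)"
    and h1: "\<forall>z\<in>V. P1 *\<^sub>R X i1 z = (\<Sum>k\<in>L. (c' k z * p k) *\<^sub>R X k z)"
    and dc: "\<forall>l\<in>L. \<forall>k\<in>L. lie_deriv_on V (\<lambda>z. p k *\<^sub>R X k z) (c l) (Dc l k)"
    and dc': "\<forall>l\<in>L. \<forall>k\<in>L. lie_deriv_on V (\<lambda>z. p k *\<^sub>R X k z) (c' l) (Dc' l k)"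
    and hb: "\<forall>l\<in>L. \<forall>k\<in>L. (p l * p k) *\<^sub>R lie_bracket (X l) (X k) y = (\<Sum>j\<in>L. (e l k j * p j) *\<^sub>R X j y)"
  shows "(P0 * P1) *\<^sub>R lie_bracket (X i0) (X i1) y =
    (\<Sum>j\<in>L. (((\<Sum>l\<in>L. c l y * Dc' j l y) - (\<Sum>k\<in>L. c' k y * Dc j k y) +
               (\<Sum>l\<in>L. \<Sum>k\<in>L. c l y * c' k y * e l k j)) * p j) *\<^sub>R X j y)"
proof -
  define A where "A = frechet_derivative (X i1) (at y)"
  define B where "B = frechet_derivative (X i0) (at y)"
  define D where "D k = frechet_derivative (X k) (at y)" for k
  have linD: "linear (D k)" if "k \<in> insert i0 (insert i1 L)" for k
    using diff that unfolding D_def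
    by (meson frechet_derivative_works has_derivative_bounded_linear bounded_linear.linear)
  have linA: "linear A" using linD[of i1] unfolding A_def D_def by simp
  have linB: "linear B" using linD[of i0] unfolding B_def D_def by simp
  have E1: "P1 *\<^sub>R A (p l *\<^sub>R X l y) = (\<Sum>k\<in>L. (c' k y * p k) *\<^sub>R D k (p l *\<^sub>R X l y) + (Dc' k l y * p k) *\<^sub>R X k y)"
    if l: "l \<in> L" for l
    using dir_deriv[OF cur l y, where Z="X i1" and Q=P1 and c=c' and p=p and Dc="\<lambda>k. Dc' k l" and X=X] diff h1 dc' l
    unfolding A_def D_def by auto
  have E0: "P0 *\<^sub>R B (p k *\<^sub>R X k y) = (\<Sum>l\<in>L. (c l y * p l) *\<^sub>R D l (p k *\<^sub>R X k y) + (Dc l k y * p l) *\<^sub>R X l y)"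
    if k: "k \<in> L" for k
    using dir_deriv[OF cur k y, where Z="X i0" and Q=P0 and c=c and p=p and Dc="\<lambda>l. Dc l k" and X=X] diff h0 dc k
    unfolding B_def D_def by auto
  have br: "lie_bracket (X i0) (X i1) y = A (X i0 y) - B (X i1 y)"
    unfolding lie_bracket_def A_def B_def ..
  have s1: "(P0 * P1) *\<^sub>R A (X i0 y) = (\<Sum>l\<in>L. c l y *\<^sub>R (P1 *\<^sub>R A (p l *\<^sub>R X l y)))"
  proof -
    have "(P0 * P1) *\<^sub>R A (X i0 y) = P1 *\<^sub>R A (P0 *\<^sub>R X i0 y)" using linA by (simp add: linear_scale)
    also have "\<dots> = P1 *\<^sub>R A (\<Sum>l\<in>L. (c l y * p l) *\<^sub>R X l y)" using h0 y by simp
    also have "\<dots> = (\<Sum>l\<in>L. c l y *\<^sub>R (P1 *\<^sub>R A (p l *\<^sub>R X l y)))"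
      using linA fin by (simp add: linear_sum linear_scale scaleR_sum_right mult.left_commute)
    finally show ?thesis .
  qed
  have s2: "(P0 * P1) *\<^sub>R B (X i1 y) = (\<Sum>k\<in>L. c' k y *\<^sub>R (P0 *\<^sub>R B (p k *\<^sub>R X k y)))"
  proof -
    have "(P0 * P1) *\<^sub>R B (X i1 y) = P0 *\<^sub>R B (P1 *\<^sub>R X i1 y)" using linB by (simp add: linear_scale)
    also have "\<dots> = P0 *\<^sub>R B (\<Sum>k\<in>L. (c' k y * p k) *\<^sub>R X k y)" using h1 y by simp
    also have "\<dots> = (\<Sum>k\<in>L. c' k y *\<^sub>R (P0 *\<^sub>R B (p k *\<^sub>R X k y)))"
      using linB fin by (simp add: linear_sum linear_scale scaleR_sum_right mult.left_commute)
    finally show ?thesis .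
  qed
  define T1 where "T1 = (\<Sum>l\<in>L. \<Sum>k\<in>L. (c l y * Dc' k l y * p k) *\<^sub>R X k y)"
  define T2 where "T2 = (\<Sum>k\<in>L. \<Sum>l\<in>L. (c' k y * Dc l k y * p l) *\<^sub>R X l y)"
  define C1 where "C1 = (\<Sum>l\<in>L. \<Sum>k\<in>L. (c l y * c' k y * p k) *\<^sub>R D k (p l *\<^sub>R X l y))"
  define C2 where "C2 = (\<Sum>k\<in>L. \<Sum>l\<in>L. (c' k y * c l y * p l) *\<^sub>R D l (p k *\<^sub>R X k y))"
  have s1': "(\<Sum>l\<in>L. c l y *\<^sub>R (P1 *\<^sub>R A (p l *\<^sub>R X l y))) = C1 + T1"
    unfolding C1_def T1_def using E1
    by (simp add: scaleR_sum_right scaleR_add_right sum.distrib[symmetric] mult.assoc)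
  have s2': "(\<Sum>k\<in>L. c' k y *\<^sub>R (P0 *\<^sub>R B (p k *\<^sub>R X k y))) = C2 + T2"
    unfolding C2_def T2_def using E0
    by (simp add: scaleR_sum_right scaleR_add_right sum.distrib[symmetric] mult.assoc)
  have C: "C1 - C2 = (\<Sum>l\<in>L. \<Sum>k\<in>L. (c l y * c' k y) *\<^sub>R (\<Sum>j\<in>L. (e l k j * p j) *\<^sub>R X j y))"
  proof -
    have C2': "C2 = (\<Sum>l\<in>L. \<Sum>k\<in>L. (c' k y * c l y * p l) *\<^sub>R D l (p k *\<^sub>R X k y))"
      unfolding C2_def by (rule sum.swap)
    have "C1 - C2 = (\<Sum>l\<in>L. \<Sum>k\<in>L. (c l y * c' k y) *\<^sub>R ((p l * p k) *\<^sub>R lie_bracket (X l) (X k) y))"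
      unfolding C1_def C2' sum_subtractf[symmetric]
    proof (intro sum.cong refl)
      fix l k assume l: "l \<in> L" and k: "k \<in> L"
      have lb: "lie_bracket (X l) (X k) y = D k (X l y) - D l (X k y)" unfolding lie_bracket_def D_def ..
      show "(c l y * c' k y * p k) *\<^sub>R D k (p l *\<^sub>R X l y) - (c' k y * c l y * p l) *\<^sub>R D l (p k *\<^sub>R X k y) =
          (c l y * c' k y) *\<^sub>R ((p l * p k) *\<^sub>R lie_bracket (X l) (X k) y)"
        unfolding lb using linD[of k] linD[of l] l k by (simp add: linear_scale algebra_simps)
    qed
    also have "\<dots> = (\<Sum>l\<in>L. \<Sum>k\<in>L. (c l y * c' k y) *\<^sub>R (\<Sum>j\<in>L. (e l k j * p j) *\<^sub>R X j y))"
      using hb by (intro sum.cong refl) auto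
    finally show ?thesis .
  qed
  have lhs: "(P0 * P1) *\<^sub>R lie_bracket (X i0) (X i1) y = T1 - T2 + (C1 - C2)"
    unfolding br scaleR_diff_right s1 s2 s1' s2' by simp
  have T1': "T1 = (\<Sum>j\<in>L. ((\<Sum>l\<in>L. c l y * Dc' j l y) * p j) *\<^sub>R X j y)"
    unfolding T1_def by (subst sum.swap) (simp add: sum_distrib_right scaleR_sum_left)
  have T2': "T2 = (\<Sum>j\<in>L. ((\<Sum>k\<in>L. c' k y * Dc j k y) * p j) *\<^sub>R X j y)"
    unfolding T2_def by (subst sum.swap) (simp add: sum_distrib_right scaleR_sum_left)
  have C': "(\<Sum>l\<in>L. \<Sum>k\<in>L. (c l y * c' k y) *\<^sub>R (\<Sum>j\<in>L. (e l k j * p j) *\<^sub>R X j y)) =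
      (\<Sum>j\<in>L. ((\<Sum>l\<in>L. \<Sum>k\<in>L. c l y * c' k y * e l k j) * p j) *\<^sub>R X j y)"
  proof -
    have "(\<Sum>l\<in>L. \<Sum>k\<in>L. (c l y * c' k y) *\<^sub>R (\<Sum>j\<in>L. (e l k j * p j) *\<^sub>R X j y)) =
        (\<Sum>l\<in>L. \<Sum>k\<in>L. \<Sum>j\<in>L. (c l y * c' k y * e l k j * p j) *\<^sub>R X j y)"
      by (simp add: scaleR_sum_right mult.assoc)
    also have "\<dots> = (\<Sum>l\<in>L. \<Sum>j\<in>L. \<Sum>k\<in>L. (c l y * c' k y * e l k j * p j) *\<^sub>R X j y)"
      by (rule sum.cong[OF refl], rule sum.swap)
    also have "\<dots> = (\<Sum>j\<in>L. \<Sum>l\<in>L. \<Sum>k\<in>L. (c l y * c' k y * e l k j * p j) *\<^sub>R X j y)"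
      by (rule sum.swap)
    also have "\<dots> = (\<Sum>j\<in>L. ((\<Sum>l\<in>L. \<Sum>k\<in>L. c l y * c' k y * e l k j) * p j) *\<^sub>R X j y)"
      by (simp add: sum_distrib_right scaleR_sum_left)
    finally show ?thesis .
  qed
  show ?thesis
    unfolding lhs C T1' T2' C' by (rule comb3)
qed



lemma ld_cong:
  assumes "\<forall>y\<in>V. g y = g' y" "lie_deriv_on V Y g h"
  shows "lie_deriv_on V Y g' h"
  unfolding lie_deriv_on_def
proof (intro ballI allI impI)
  fix y \<gamma> e assume y: "y \<in> V" and hh: "e > 0 \<and> \<gamma> 0 = y \<and>
      (\<forall>t\<in>{-e..e}. \<gamma> t \<in> V \<and> (\<gamma> has_vector_derivative Y (\<gamma> t)) (at t within {-e..e}))"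
  have "((g \<circ> \<gamma>) has_real_derivative h y) (at 0 within {-e..e})"
    using assms(2) y hh unfolding lie_deriv_on_def by blast
  then have "((g \<circ> \<gamma>) has_vector_derivative h y) (at 0 within {-e..e})"
    by (simp add: has_real_derivative_iff_has_vector_derivative)
  then have "((g' \<circ> \<gamma>) has_vector_derivative h y) (at 0 within {-e..e})"
    by (rule has_vector_derivative_transform[rotated 2]) (use hh assms(1) in auto)
  then show "((g' \<circ> \<gamma>) has_real_derivative h y) (at 0 within {-e..e})"
    by (simp add: has_real_derivative_iff_has_vector_derivative)
qed

lemma fam_level_mono: "m' \<le> m \<Longrightarrow> fam V L Y D m \<Longrightarrow> fam V L Y D m'"
  unfolding fam_def by (meson le_trans less_le_trans)

lemma fb_level_mono: "m' \<le> m \<Longrightarrow> fb V L Y D m K \<Longrightarrow> fb V L Y D m' K"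
  unfolding fb_def using fam_level_mono by (meson le_trans)

definition ctrl ::
  "'a::euclidean_space set \<Rightarrow> nat set \<Rightarrow> (nat \<Rightarrow> 'a \<Rightarrow> 'a) \<Rightarrow> (nat \<Rightarrow> real^'v) \<Rightarrow> ('a \<Rightarrow> 'a) \<Rightarrow> real^'v
    \<Rightarrow> 'a set \<Rightarrow> real \<Rightarrow> ('a \<Rightarrow> real^'v \<Rightarrow> nat \<Rightarrow> 'a \<Rightarrow> real) \<Rightarrow> bool" where
  "ctrl \<Omega> L X d Z dZ U \<xi>1 c \<longleftrightarrow> open U \<and> 0 \<in> U \<and> U \<subseteq> \<Omega> \<and> \<xi>1 > 0 \<and>
        (\<forall>x\<in>U. cond_C \<Omega> L X d x (\<chi> \<mu>. \<xi>1)) \<and>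
          (\<forall>x\<in>U. \<forall>\<delta>. (\<forall>\<mu>. 0 \<le> \<delta> $ \<mu> \<and> \<delta> $ \<mu> \<le> 1) \<longrightarrow>
             (\<forall>y\<in>cc_ball \<Omega> L X d x (\<xi>1 *\<^sub>R \<delta>).
                dpow \<delta> dZ *\<^sub>R Z y = (\<Sum>l\<in>L. (c x \<delta> l y * dpow \<delta> (d l)) *\<^sub>R X l y))) \<and>
          (\<forall>m. \<forall>l\<in>L. \<exists>C::real. \<forall>x\<in>U. \<forall>\<delta>. (\<forall>\<mu>. 0 \<le> \<delta> $ \<mu> \<and> \<delta> $ \<mu> \<le> 1) \<longrightarrow>
             (\<exists>D. vf_derivs (cc_ball \<Omega> L X d x (\<xi>1 *\<^sub>R \<delta>)) L (\<lambda>j y. dpow \<delta> (d j) *\<^sub>R X j y) (c x \<delta> l) D m \<and>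
                  (\<Sum>\<beta>\<in>{\<beta>. set \<beta> \<subseteq> L \<and> length \<beta> \<le> m}.
                      (SUP y\<in>cc_ball \<Omega> L X d x (\<xi>1 *\<^sub>R \<delta>). ereal \<bar>D \<beta> y\<bar>)) \<le> ereal C))"

lemma controls_ctrl: "controls \<Omega> L X d Z dZ \<longleftrightarrow> (\<exists>U \<xi>1 c. ctrl \<Omega> L X d Z dZ U \<xi>1 c)"
  unfolding controls_def ctrl_def by blast

lemma curves_ball:
  fixes \<Omega> :: "'a::euclidean_space set" and X :: "nat \<Rightarrow> 'a \<Rightarrow> 'a" and d :: "nat \<Rightarrow> real^'v"
  assumes "finite L" "open \<Omega>" "\<forall>l\<in>L. smooth_on \<Omega> (X l)" "\<xi> > 0" "\<forall>\<mu>. 0 \<le> \<delta> $ \<mu>"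
  shows "curves (cc_ball \<Omega> L X d x (\<xi> *\<^sub>R \<delta>)) L (\<lambda>j z. dpow \<delta> (d j) *\<^sub>R X j z)"
  unfolding curves_def
proof (intro ballI)
  fix y l assume y: "y \<in> cc_ball \<Omega> L X d x (\<xi> *\<^sub>R \<delta>)" and l: "l \<in> L"
  show "\<exists>e>0. \<exists>\<sigma>. \<sigma> 0 = y \<and> (\<forall>t\<in>{-e..e}. \<sigma> t \<in> cc_ball \<Omega> L X d x (\<xi> *\<^sub>R \<delta>) \<and>
      (\<sigma> has_vector_derivative dpow \<delta> (d l) *\<^sub>R X l (\<sigma> t)) (at t within {-e..e}))"
  proof (cases "dpow \<delta> (d l) = 0")
    case True
    have "((\<lambda>t. y) has_vector_derivative dpow \<delta> (d l) *\<^sub>R X l y) (at t within {-1..1})" for t :: real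
      using True by (simp add: has_vector_derivative_const)
    then show ?thesis using y by (intro exI[of _ "1::real"] exI[of _ "\<lambda>t. y"]) auto
  next
    case False
    then have "dpow \<delta> (d l) > 0" using dpow_nonneg[of \<delta> "d l"] by simp
    then have "dpow (\<xi> *\<^sub>R \<delta>) (d l) > 0" using dpow_scale_pos assms(4,5) by blast
    then show ?thesis
      using ball_flow[OF assms(1) l assms(2) _ y _ dpow_nonneg[of \<delta> "d l"]] assms(3) l by blast
  qed
qed

lemma ctrl_basic:
  assumes "ctrl \<Omega> L X d Z dZ U \<xi>1 c"
  shows "open U" "0 \<in> U" "U \<subseteq> \<Omega>" "\<xi>1 > 0" "\<forall>x\<in>U. cond_C \<Omega> L X d x (\<chi> \<mu>. \<xi>1)"
  using assms unfolding ctrl_def by simp_all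

lemma ctrl_id:
  assumes "ctrl \<Omega> L X d Z dZ U \<xi>1 c" "x \<in> U" "\<forall>\<mu>. 0 \<le> \<delta> $ \<mu> \<and> \<delta> $ \<mu> \<le> 1" "y \<in> cc_ball \<Omega> L X d x (\<xi>1 *\<^sub>R \<delta>)"
  shows "dpow \<delta> dZ *\<^sub>R Z y = (\<Sum>l\<in>L. (c x \<delta> l y * dpow \<delta> (d l)) *\<^sub>R X l y)"
  using assms unfolding ctrl_def by blast

lemma ctrl_bd:
  assumes "ctrl \<Omega> L X d Z dZ U \<xi>1 c" "l \<in> L"
  shows "\<exists>C::real. \<forall>x\<in>U. \<forall>\<delta>. (\<forall>\<mu>. 0 \<le> \<delta> $ \<mu> \<and> \<delta> $ \<mu> \<le> 1) \<longrightarrow>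
             (\<exists>D. vf_derivs (cc_ball \<Omega> L X d x (\<xi>1 *\<^sub>R \<delta>)) L (\<lambda>j y. dpow \<delta> (d j) *\<^sub>R X j y) (c x \<delta> l) D m \<and>
                  (\<Sum>\<beta>\<in>{\<beta>. set \<beta> \<subseteq> L \<and> length \<beta> \<le> m}.
                      (SUP y\<in>cc_ball \<Omega> L X d x (\<xi>1 *\<^sub>R \<delta>). ereal \<bar>D \<beta> y\<bar>)) \<le> ereal C)"
  using assms unfolding ctrl_def by blast

theorem lemma7p3:
  fixes \<Omega> :: "'a::euclidean_space set"
    and X :: "nat \<Rightarrow> 'a \<Rightarrow> 'a"
    and d :: "nat \<Rightarrow> real^'v"
    and q :: nat
  assumes "open \<Omega>" and "0 \<in> \<Omega>" and "q \<ge> 2"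
    and "\<forall>i\<in>{0..q}. smooth_on \<Omega> (X i)"
    and "\<forall>i\<in>{0..q}. (\<forall>\<mu>. 0 \<le> d i $ \<mu>) \<and> d i \<noteq> 0"
    and "\<forall>i\<in>{2..q}. \<forall>j\<in>{2..q}. controls \<Omega> {2..q} X d (lie_bracket (X i) (X j)) (d i + d j)"
    and "controls \<Omega> {2..q} X d (X 0) (d 0)"
    and "controls \<Omega> {2..q} X d (X 1) (d 1)"
  shows "controls \<Omega> {2..q} X d (lie_bracket (X 0) (X 1)) (d 0 + d 1)"
proof -
  define L where "L = {2..q}"
  have finL: "finite L" unfolding L_def by simp
  have Lsub: "L \<subseteq> {0..q}" unfolding L_def by auto
  have sm: "\<forall>i\<in>{0..q}. smooth_on \<Omega> (X i)" using assms(4) .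
  have smL: "\<forall>l\<in>L. smooth_on \<Omega> (X l)" using sm Lsub by blast
  have dnn: "\<forall>l\<in>L. \<forall>\<mu>. 0 \<le> d l $ \<mu>" using assms(5) Lsub by blast
  have d0: "\<forall>\<mu>. 0 \<le> d 0 $ \<mu>" and d1: "\<forall>\<mu>. 0 \<le> d 1 $ \<mu>" using assms(5,3) by auto
  obtain U0 \<xi>0 c0 where C0: "ctrl \<Omega> L X d (X 0) (d 0) U0 \<xi>0 c0"
    using assms(7) unfolding controls_ctrl L_def by blast
  obtain U1 \<xi>1 c1 where C1: "ctrl \<Omega> L X d (X 1) (d 1) U1 \<xi>1 c1"
    using assms(8) unfolding controls_ctrl L_def by blast
  have "\<forall>p\<in>L \<times> L. \<exists>t. ctrl \<Omega> L X d (lie_bracket (X (fst p)) (X (snd p))) (d (fst p) + d (snd p)) (fst t) (fst (snd t)) (snd (snd t))"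
  proof
    fix p assume p: "p \<in> L \<times> L"
    then have "fst p \<in> {2..q}" "snd p \<in> {2..q}" unfolding L_def by auto
    then have "controls \<Omega> {2..q} X d (lie_bracket (X (fst p)) (X (snd p))) (d (fst p) + d (snd p))"
      using assms(6) by blast
    then obtain U' \<xi>' c' where "ctrl \<Omega> L X d (lie_bracket (X (fst p)) (X (snd p))) (d (fst p) + d (snd p)) U' \<xi>' c'"
      unfolding controls_ctrl L_def by blast
    then show "\<exists>t. ctrl \<Omega> L X d (lie_bracket (X (fst p)) (X (snd p))) (d (fst p) + d (snd p)) (fst t) (fst (snd t)) (snd (snd t))"
      by (intro exI[of _ "(U', \<xi>', c')"]) simp
  qed
  from bchoice[OF this] obtain FB where FB: "\<forall>p\<in>L \<times> L. ctrl \<Omega> L X d (lie_bracket (X (fst p)) (X (snd p))) (d (fst p) + d (snd p))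
      (fst (FB p)) (fst (snd (FB p))) (snd (snd (FB p)))" by blast
  define UB where "UB p = fst (FB p)" for p
  define \<xi>B where "\<xi>B p = fst (snd (FB p))" for p
  define eB where "eB p = snd (snd (FB p))" for p
  have CB: "ctrl \<Omega> L X d (lie_bracket (X (fst p)) (X (snd p))) (d (fst p) + d (snd p)) (UB p) (\<xi>B p) (eB p)"
    if "p \<in> L \<times> L" for p
    using FB that unfolding UB_def \<xi>B_def eB_def by blast
  define U where "U = U0 \<inter> U1 \<inter> (\<Inter>p\<in>L \<times> L. UB p)"
  define \<Xi> where "\<Xi> = insert \<xi>0 (insert \<xi>1 (\<xi>B ` (L \<times> L)))"
  define \<xi> where "\<xi> = Min \<Xi>"
  have fin\<Xi>: "finite \<Xi>" unfolding \<Xi>_def using finL by simp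
  have pos\<Xi>: "\<forall>z\<in>\<Xi>. z > 0" unfolding \<Xi>_def using ctrl_basic(4)[OF C0] ctrl_basic(4)[OF C1] ctrl_basic(4)[OF CB] by auto
  have \<xi>pos: "\<xi> > 0" unfolding \<xi>_def using fin\<Xi> pos\<Xi> by (simp add: \<Xi>_def)
  have \<xi>0: "\<xi> \<le> \<xi>0" unfolding \<xi>_def by (rule Min_le[OF fin\<Xi>]) (simp add: \<Xi>_def)
  have \<xi>1: "\<xi> \<le> \<xi>1" unfolding \<xi>_def by (rule Min_le[OF fin\<Xi>]) (simp add: \<Xi>_def)
  have \<xi>B: "\<xi> \<le> \<xi>B p" if "p \<in> L \<times> L" for p unfolding \<xi>_def by (rule Min_le[OF fin\<Xi>]) (use that in \<open>simp add: \<Xi>_def\<close>)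
  have Uopen: "open U" unfolding U_def using ctrl_basic(1)[OF C0] ctrl_basic(1)[OF C1] ctrl_basic(1)[OF CB] finL
    by (intro open_Int open_INT) auto
  have U0in: "0 \<in> U" unfolding U_def using ctrl_basic(2)[OF C0] ctrl_basic(2)[OF C1] ctrl_basic(2)[OF CB] by auto
  have UOm: "U \<subseteq> \<Omega>" unfolding U_def using ctrl_basic(3)[OF C0] by auto
  have UU0: "U \<subseteq> U0" and UU1: "U \<subseteq> U1" and UUB: "\<And>p. p \<in> L \<times> L \<Longrightarrow> U \<subseteq> UB p" unfolding U_def by auto
  have condU: "\<forall>x\<in>U. cond_C \<Omega> L X d x (\<chi> \<mu>. \<xi>)"
    using ctrl_basic(5)[OF C0] UU0 cond_C_mono[OF \<xi>pos \<xi>0 dnn] by blast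
  have Bsub0: "cc_ball \<Omega> L X d x (\<xi> *\<^sub>R \<delta>) \<subseteq> cc_ball \<Omega> L X d x (\<xi>0 *\<^sub>R \<delta>)" if "\<forall>\<mu>. 0 \<le> \<delta> $ \<mu>" for x \<delta>
    by (rule cc_ball_mono[OF \<xi>pos \<xi>0 that dnn])
  have Bsub1: "cc_ball \<Omega> L X d x (\<xi> *\<^sub>R \<delta>) \<subseteq> cc_ball \<Omega> L X d x (\<xi>1 *\<^sub>R \<delta>)" if "\<forall>\<mu>. 0 \<le> \<delta> $ \<mu>" for x \<delta>
    by (rule cc_ball_mono[OF \<xi>pos \<xi>1 that dnn])
  have BsubB: "cc_ball \<Omega> L X d x (\<xi> *\<^sub>R \<delta>) \<subseteq> cc_ball \<Omega> L X d x (\<xi>B p *\<^sub>R \<delta>)"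
    if "\<forall>\<mu>. 0 \<le> \<delta> $ \<mu>" "p \<in> L \<times> L" for x \<delta> p
    by (rule cc_ball_mono[OF \<xi>pos \<xi>B[OF that(2)] that(1) dnn])
  have curB: "curves (cc_ball \<Omega> L X d x (\<xi> *\<^sub>R \<delta>)) L (\<lambda>j z. dpow \<delta> (d j) *\<^sub>R X j z)"
    if "\<forall>\<mu>. 0 \<le> \<delta> $ \<mu>" for x \<delta>
    by (rule curves_ball[OF finL assms(1) smL \<xi>pos that])
  define Dc where "Dc x \<delta> l = (SOME D. vf_derivs (cc_ball \<Omega> L X d x (\<xi>0 *\<^sub>R \<delta>)) L (\<lambda>j y. dpow \<delta> (d j) *\<^sub>R X j y) (c0 x \<delta> l) D 1)"
    for x \<delta> l
  define Dc' where "Dc' x \<delta> l = (SOME D. vf_derivs (cc_ball \<Omega> L X d x (\<xi>1 *\<^sub>R \<delta>)) L (\<lambda>j y. dpow \<delta> (d j) *\<^sub>R X j y) (c1 x \<delta> l) D 1)"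
    for x \<delta> l
  have Dc: "vf_derivs (cc_ball \<Omega> L X d x (\<xi>0 *\<^sub>R \<delta>)) L (\<lambda>j y. dpow \<delta> (d j) *\<^sub>R X j y) (c0 x \<delta> l) (Dc x \<delta> l) 1"
    if xU: "x \<in> U0" and bx: "\<forall>\<mu>. 0 \<le> \<delta> $ \<mu> \<and> \<delta> $ \<mu> \<le> 1" and lL: "l \<in> L" for x \<delta> l
  proof -
    obtain C where "\<forall>x\<in>U0. \<forall>\<delta>. (\<forall>\<mu>. 0 \<le> \<delta> $ \<mu> \<and> \<delta> $ \<mu> \<le> 1) \<longrightarrow>
             (\<exists>D. vf_derivs (cc_ball \<Omega> L X d x (\<xi>0 *\<^sub>R \<delta>)) L (\<lambda>j y. dpow \<delta> (d j) *\<^sub>R X j y) (c0 x \<delta> l) D 1 \<and>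
                  (\<Sum>\<beta>\<in>{\<beta>. set \<beta> \<subseteq> L \<and> length \<beta> \<le> 1}.
                      (SUP y\<in>cc_ball \<Omega> L X d x (\<xi>0 *\<^sub>R \<delta>). ereal \<bar>D \<beta> y\<bar>)) \<le> ereal C)"
      using ctrl_bd[OF C0 lL, of 1] by blast
    then have "\<exists>D. vf_derivs (cc_ball \<Omega> L X d x (\<xi>0 *\<^sub>R \<delta>)) L (\<lambda>j y. dpow \<delta> (d j) *\<^sub>R X j y) (c0 x \<delta> l) D 1"
      using xU bx by blast
    then show ?thesis unfolding Dc_def by (rule someI_ex)
  qed
  have Dc': "vf_derivs (cc_ball \<Omega> L X d x (\<xi>1 *\<^sub>R \<delta>)) L (\<lambda>j y. dpow \<delta> (d j) *\<^sub>R X j y) (c1 x \<delta> l) (Dc' x \<delta> l) 1"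
    if xU: "x \<in> U1" and bx: "\<forall>\<mu>. 0 \<le> \<delta> $ \<mu> \<and> \<delta> $ \<mu> \<le> 1" and lL: "l \<in> L" for x \<delta> l
  proof -
    obtain C where "\<forall>x\<in>U1. \<forall>\<delta>. (\<forall>\<mu>. 0 \<le> \<delta> $ \<mu> \<and> \<delta> $ \<mu> \<le> 1) \<longrightarrow>
             (\<exists>D. vf_derivs (cc_ball \<Omega> L X d x (\<xi>1 *\<^sub>R \<delta>)) L (\<lambda>j y. dpow \<delta> (d j) *\<^sub>R X j y) (c1 x \<delta> l) D 1 \<and>
                  (\<Sum>\<beta>\<in>{\<beta>. set \<beta> \<subseteq> L \<and> length \<beta> \<le> 1}.
                      (SUP y\<in>cc_ball \<Omega> L X d x (\<xi>1 *\<^sub>R \<delta>). ereal \<bar>D \<beta> y\<bar>)) \<le> ereal C)"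
      using ctrl_bd[OF C1 lL, of 1] by blast
    then have "\<exists>D. vf_derivs (cc_ball \<Omega> L X d x (\<xi>1 *\<^sub>R \<delta>)) L (\<lambda>j y. dpow \<delta> (d j) *\<^sub>R X j y) (c1 x \<delta> l) D 1"
      using xU bx by blast
    then show ?thesis unfolding Dc'_def by (rule someI_ex)
  qed
  define cn where "cn x \<delta> j y = (\<Sum>l\<in>L. c0 x \<delta> l y * Dc' x \<delta> j [l] y) - (\<Sum>k\<in>L. c1 x \<delta> k y * Dc x \<delta> j [k] y) +
      (\<Sum>l\<in>L. \<Sum>k\<in>L. c0 x \<delta> l y * c1 x \<delta> k y * eB (l, k) x \<delta> j y)" for x \<delta> j y
  have ldc: "lie_deriv_on (cc_ball \<Omega> L X d x (\<xi> *\<^sub>R \<delta>)) (\<lambda>z. dpow \<delta> (d k) *\<^sub>R X k z) c (D [k])"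
    if "vf_derivs V L (\<lambda>j y. dpow \<delta> (d j) *\<^sub>R X j y) c D 1" "cc_ball \<Omega> L X d x (\<xi> *\<^sub>R \<delta>) \<subseteq> V" "k \<in> L"
    for x \<delta> k c D V
  proof -
    have A: "\<forall>\<beta> l. set \<beta> \<subseteq> L \<and> l \<in> L \<and> length \<beta> < 1 \<longrightarrow>
        lie_deriv_on V ((\<lambda>j y. dpow \<delta> (d j) *\<^sub>R X j y) l) (D \<beta>) (D (l # \<beta>))"
      using that(1) unfolding vf_derivs_def by blast
    have "lie_deriv_on V (\<lambda>z. dpow \<delta> (d k) *\<^sub>R X k z) (D []) (D [k])"
      using A[rule_format, of "[]" k] that(3) by simp
    then have A': "lie_deriv_on (cc_ball \<Omega> L X d x (\<xi> *\<^sub>R \<delta>)) (\<lambda>z. dpow \<delta> (d k) *\<^sub>R X k z) (D []) (D [k])"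
      by (rule ld_subset[OF that(2)])
    have B': "\<forall>y\<in>cc_ball \<Omega> L X d x (\<xi> *\<^sub>R \<delta>). D [] y = c y"
      using that(1,2) unfolding vf_derivs_def by blast
    show ?thesis using ld_cong[OF B' A'] .
  qed
  have diffX: "X i differentiable at y" if "i \<in> {0..q}" "y \<in> \<Omega>" for i y
  proof -
    have "smooth_on \<Omega> (X i)" using sm that(1) by blast
    from smooth_onD[OF this] obtain f' where "\<forall>x\<in>\<Omega>. (X i has_derivative f' x) (at x)" by blast
    then have "(X i has_derivative f' y) (at y)" using that(2) by blast
    then show ?thesis by (rule differentiableI)
  qed
  have ident: "dpow \<delta> (d 0 + d 1) *\<^sub>R lie_bracket (X 0) (X 1) y = (\<Sum>j\<in>L. (cn x \<delta> j y * dpow \<delta> (d j)) *\<^sub>R X j y)"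
    if x: "x \<in> U" and box: "\<forall>\<mu>. 0 \<le> \<delta> $ \<mu> \<and> \<delta> $ \<mu> \<le> 1" and y: "y \<in> cc_ball \<Omega> L X d x (\<xi> *\<^sub>R \<delta>)" for x \<delta> y
  proof -
    have nn: "\<forall>\<mu>. 0 \<le> \<delta> $ \<mu>" using box by blast
    have yO: "y \<in> \<Omega>" using y unfolding cc_ball_def by blast
    have diff: "\<forall>i\<in>insert 0 (insert 1 L). X i differentiable at y"
      using diffX[OF _ yO] Lsub assms(3) by auto
    have h0: "\<forall>z\<in>cc_ball \<Omega> L X d x (\<xi> *\<^sub>R \<delta>). dpow \<delta> (d 0) *\<^sub>R X 0 z = (\<Sum>l\<in>L. (c0 x \<delta> l z * dpow \<delta> (d l)) *\<^sub>R X l z)"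
      using ctrl_id[OF C0] x UU0 box Bsub0[OF nn] by blast
    have h1: "\<forall>z\<in>cc_ball \<Omega> L X d x (\<xi> *\<^sub>R \<delta>). dpow \<delta> (d 1) *\<^sub>R X 1 z = (\<Sum>l\<in>L. (c1 x \<delta> l z * dpow \<delta> (d l)) *\<^sub>R X l z)"
      using ctrl_id[OF C1] x UU1 box Bsub1[OF nn] by blast
    have dc: "\<forall>l\<in>L. \<forall>k\<in>L. lie_deriv_on (cc_ball \<Omega> L X d x (\<xi> *\<^sub>R \<delta>)) (\<lambda>z. dpow \<delta> (d k) *\<^sub>R X k z) (c0 x \<delta> l) (Dc x \<delta> l [k])"
      using ldc[OF Dc Bsub0[OF nn]] x UU0 box by blast
    have dc': "\<forall>l\<in>L. \<forall>k\<in>L. lie_deriv_on (cc_ball \<Omega> L X d x (\<xi> *\<^sub>R \<delta>)) (\<lambda>z. dpow \<delta> (d k) *\<^sub>R X k z) (c1 x \<delta> l) (Dc' x \<delta> l [k])"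
      using ldc[OF Dc' Bsub1[OF nn]] x UU1 box by blast
    have hb: "\<forall>l\<in>L. \<forall>k\<in>L. (dpow \<delta> (d l) * dpow \<delta> (d k)) *\<^sub>R lie_bracket (X l) (X k) y =
        (\<Sum>j\<in>L. (eB (l, k) x \<delta> j y * dpow \<delta> (d j)) *\<^sub>R X j y)"
    proof (intro ballI)
      fix l k assume l: "l \<in> L" and k: "k \<in> L"
      then have lk: "(l, k) \<in> L \<times> L" by simp
      have "dpow \<delta> (d l + d k) *\<^sub>R lie_bracket (X l) (X k) y = (\<Sum>j\<in>L. (eB (l, k) x \<delta> j y * dpow \<delta> (d j)) *\<^sub>R X j y)"
        using ctrl_id[OF CB[OF lk]] x UUB[OF lk] box BsubB[OF nn lk] y by force
      then show "(dpow \<delta> (d l) * dpow \<delta> (d k)) *\<^sub>R lie_bracket (X l) (X k) y =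
        (\<Sum>j\<in>L. (eB (l, k) x \<delta> j y * dpow \<delta> (d j)) *\<^sub>R X j y)"
        using dpow_add[of "d l" "d k" \<delta>] dnn l k by simp
    qed
    have "(dpow \<delta> (d 0) * dpow \<delta> (d 1)) *\<^sub>R lie_bracket (X 0) (X 1) y =
      (\<Sum>j\<in>L. (((\<Sum>l\<in>L. c0 x \<delta> l y * Dc' x \<delta> j [l] y) - (\<Sum>k\<in>L. c1 x \<delta> k y * Dc x \<delta> j [k] y) +
               (\<Sum>l\<in>L. \<Sum>k\<in>L. c0 x \<delta> l y * c1 x \<delta> k y * eB (l, k) x \<delta> j y)) * dpow \<delta> (d j)) *\<^sub>R X j y)"
      by (rule bracket_identity[OF finL curB[OF nn] y diff h0 h1 dc dc' hb])
    then show ?thesis unfolding cn_def using dpow_add[OF d0 d1, of \<delta>] by simp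
  qed
  have bounds: "\<exists>C::real. \<forall>x\<in>U. \<forall>\<delta>. (\<forall>\<mu>. 0 \<le> \<delta> $ \<mu> \<and> \<delta> $ \<mu> \<le> 1) \<longrightarrow>
             (\<exists>D. vf_derivs (cc_ball \<Omega> L X d x (\<xi> *\<^sub>R \<delta>)) L (\<lambda>j y. dpow \<delta> (d j) *\<^sub>R X j y) (cn x \<delta> j) D m \<and>
                  (\<Sum>\<beta>\<in>{\<beta>. set \<beta> \<subseteq> L \<and> length \<beta> \<le> m}.
                      (SUP y\<in>cc_ball \<Omega> L X d x (\<xi> *\<^sub>R \<delta>). ereal \<bar>D \<beta> y\<bar>)) \<le> ereal C)"
    if j: "j \<in> L" for m j
  proof -
    have "\<forall>l\<in>L. \<exists>C::real. \<forall>x\<in>U0. \<forall>\<delta>. (\<forall>\<mu>. 0 \<le> \<delta> $ \<mu> \<and> \<delta> $ \<mu> \<le> 1) \<longrightarrow>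
             (\<exists>D. vf_derivs (cc_ball \<Omega> L X d x (\<xi>0 *\<^sub>R \<delta>)) L (\<lambda>j y. dpow \<delta> (d j) *\<^sub>R X j y) (c0 x \<delta> l) D (Suc m) \<and>
                  (\<Sum>\<beta>\<in>{\<beta>. set \<beta> \<subseteq> L \<and> length \<beta> \<le> Suc m}.
                      (SUP y\<in>cc_ball \<Omega> L X d x (\<xi>0 *\<^sub>R \<delta>). ereal \<bar>D \<beta> y\<bar>)) \<le> ereal C)"
      using ctrl_bd[OF C0] by blast
    from bchoice[OF this] obtain C0 where hC0: "\<forall>l\<in>L. \<forall>x\<in>U0. \<forall>\<delta>. (\<forall>\<mu>. 0 \<le> \<delta> $ \<mu> \<and> \<delta> $ \<mu> \<le> 1) \<longrightarrow>
             (\<exists>D. vf_derivs (cc_ball \<Omega> L X d x (\<xi>0 *\<^sub>R \<delta>)) L (\<lambda>j y. dpow \<delta> (d j) *\<^sub>R X j y) (c0 x \<delta> l) D (Suc m) \<and>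
                  (\<Sum>\<beta>\<in>{\<beta>. set \<beta> \<subseteq> L \<and> length \<beta> \<le> Suc m}.
                      (SUP y\<in>cc_ball \<Omega> L X d x (\<xi>0 *\<^sub>R \<delta>). ereal \<bar>D \<beta> y\<bar>)) \<le> ereal (C0 l))" by blast
    have "\<forall>l\<in>L. \<exists>C::real. \<forall>x\<in>U1. \<forall>\<delta>. (\<forall>\<mu>. 0 \<le> \<delta> $ \<mu> \<and> \<delta> $ \<mu> \<le> 1) \<longrightarrow>
             (\<exists>D. vf_derivs (cc_ball \<Omega> L X d x (\<xi>1 *\<^sub>R \<delta>)) L (\<lambda>j y. dpow \<delta> (d j) *\<^sub>R X j y) (c1 x \<delta> l) D (Suc m) \<and>
                  (\<Sum>\<beta>\<in>{\<beta>. set \<beta> \<subseteq> L \<and> length \<beta> \<le> Suc m}.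
                      (SUP y\<in>cc_ball \<Omega> L X d x (\<xi>1 *\<^sub>R \<delta>). ereal \<bar>D \<beta> y\<bar>)) \<le> ereal C)"
      using ctrl_bd[OF C1] by blast
    from bchoice[OF this] obtain C1 where hC1: "\<forall>l\<in>L. \<forall>x\<in>U1. \<forall>\<delta>. (\<forall>\<mu>. 0 \<le> \<delta> $ \<mu> \<and> \<delta> $ \<mu> \<le> 1) \<longrightarrow>
             (\<exists>D. vf_derivs (cc_ball \<Omega> L X d x (\<xi>1 *\<^sub>R \<delta>)) L (\<lambda>j y. dpow \<delta> (d j) *\<^sub>R X j y) (c1 x \<delta> l) D (Suc m) \<and>
                  (\<Sum>\<beta>\<in>{\<beta>. set \<beta> \<subseteq> L \<and> length \<beta> \<le> Suc m}.
                      (SUP y\<in>cc_ball \<Omega> L X d x (\<xi>1 *\<^sub>R \<delta>). ereal \<bar>D \<beta> y\<bar>)) \<le> ereal (C1 l))" by blast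
    have "\<forall>p\<in>L \<times> L. \<exists>C::real. \<forall>x\<in>UB p. \<forall>\<delta>. (\<forall>\<mu>. 0 \<le> \<delta> $ \<mu> \<and> \<delta> $ \<mu> \<le> 1) \<longrightarrow>
             (\<exists>D. vf_derivs (cc_ball \<Omega> L X d x (\<xi>B p *\<^sub>R \<delta>)) L (\<lambda>j y. dpow \<delta> (d j) *\<^sub>R X j y) (eB p x \<delta> j) D m \<and>
                  (\<Sum>\<beta>\<in>{\<beta>. set \<beta> \<subseteq> L \<and> length \<beta> \<le> m}.
                      (SUP y\<in>cc_ball \<Omega> L X d x (\<xi>B p *\<^sub>R \<delta>). ereal \<bar>D \<beta> y\<bar>)) \<le> ereal C)"
      using ctrl_bd[OF CB j] by blast
    from bchoice[OF this] obtain CBB where hCB: "\<forall>p\<in>L \<times> L. \<forall>x\<in>UB p. \<forall>\<delta>. (\<forall>\<mu>. 0 \<le> \<delta> $ \<mu> \<and> \<delta> $ \<mu> \<le> 1) \<longrightarrow>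
             (\<exists>D. vf_derivs (cc_ball \<Omega> L X d x (\<xi>B p *\<^sub>R \<delta>)) L (\<lambda>j y. dpow \<delta> (d j) *\<^sub>R X j y) (eB p x \<delta> j) D m \<and>
                  (\<Sum>\<beta>\<in>{\<beta>. set \<beta> \<subseteq> L \<and> length \<beta> \<le> m}.
                      (SUP y\<in>cc_ball \<Omega> L X d x (\<xi>B p *\<^sub>R \<delta>). ereal \<bar>D \<beta> y\<bar>)) \<le> ereal (CBB p))" by blast
    define K where "K = (\<Sum>l\<in>L. 2 ^ m * (C0 l * C1 j)) + (\<Sum>k\<in>L. 2 ^ m * (C1 k * C0 j)) +
       (\<Sum>l\<in>L. \<Sum>k\<in>L. 2 ^ m * (C0 l * (2 ^ m * (C1 k * CBB (l, k)))))"
    show ?thesis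
    proof (intro exI[of _ "real (card {\<beta>. set \<beta> \<subseteq> L \<and> length \<beta> \<le> m}) * K"] ballI allI impI)
      fix x and \<delta> :: "real^'v" assume x: "x \<in> U" and box: "\<forall>\<mu>. 0 \<le> \<delta> $ \<mu> \<and> \<delta> $ \<mu> \<le> 1"
      have nn: "\<forall>\<mu>. 0 \<le> \<delta> $ \<mu>" using box by blast
      let ?B = "cc_ball \<Omega> L X d x (\<xi> *\<^sub>R \<delta>)"
      let ?Y = "\<lambda>j y. dpow \<delta> (d j) *\<^sub>R X j y"
      have "\<forall>l\<in>L. \<exists>D. vf_derivs (cc_ball \<Omega> L X d x (\<xi>0 *\<^sub>R \<delta>)) L ?Y (c0 x \<delta> l) D (Suc m) \<and>
                  (\<Sum>\<beta>\<in>{\<beta>. set \<beta> \<subseteq> L \<and> length \<beta> \<le> Suc m}.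
                      (SUP y\<in>cc_ball \<Omega> L X d x (\<xi>0 *\<^sub>R \<delta>). ereal \<bar>D \<beta> y\<bar>)) \<le> ereal (C0 l)"
        using hC0 x UU0 box by blast
      from bchoice[OF this] obtain D0 where D0: "\<forall>l\<in>L. vf_derivs (cc_ball \<Omega> L X d x (\<xi>0 *\<^sub>R \<delta>)) L ?Y (c0 x \<delta> l) (D0 l) (Suc m) \<and>
                  (\<Sum>\<beta>\<in>{\<beta>. set \<beta> \<subseteq> L \<and> length \<beta> \<le> Suc m}.
                      (SUP y\<in>cc_ball \<Omega> L X d x (\<xi>0 *\<^sub>R \<delta>). ereal \<bar>D0 l \<beta> y\<bar>)) \<le> ereal (C0 l)" by blast
      have "\<forall>l\<in>L. \<exists>D. vf_derivs (cc_ball \<Omega> L X d x (\<xi>1 *\<^sub>R \<delta>)) L ?Y (c1 x \<delta> l) D (Suc m) \<and>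
                  (\<Sum>\<beta>\<in>{\<beta>. set \<beta> \<subseteq> L \<and> length \<beta> \<le> Suc m}.
                      (SUP y\<in>cc_ball \<Omega> L X d x (\<xi>1 *\<^sub>R \<delta>). ereal \<bar>D \<beta> y\<bar>)) \<le> ereal (C1 l)"
        using hC1 x UU1 box by blast
      from bchoice[OF this] obtain D1 where D1: "\<forall>l\<in>L. vf_derivs (cc_ball \<Omega> L X d x (\<xi>1 *\<^sub>R \<delta>)) L ?Y (c1 x \<delta> l) (D1 l) (Suc m) \<and>
                  (\<Sum>\<beta>\<in>{\<beta>. set \<beta> \<subseteq> L \<and> length \<beta> \<le> Suc m}.
                      (SUP y\<in>cc_ball \<Omega> L X d x (\<xi>1 *\<^sub>R \<delta>). ereal \<bar>D1 l \<beta> y\<bar>)) \<le> ereal (C1 l)" by blast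
      have "\<forall>p\<in>L \<times> L. \<exists>D. vf_derivs (cc_ball \<Omega> L X d x (\<xi>B p *\<^sub>R \<delta>)) L ?Y (eB p x \<delta> j) D m \<and>
                  (\<Sum>\<beta>\<in>{\<beta>. set \<beta> \<subseteq> L \<and> length \<beta> \<le> m}.
                      (SUP y\<in>cc_ball \<Omega> L X d x (\<xi>B p *\<^sub>R \<delta>). ereal \<bar>D \<beta> y\<bar>)) \<le> ereal (CBB p)"
        using hCB x UUB box by blast
      from bchoice[OF this] obtain DB where DB: "\<forall>p\<in>L \<times> L. vf_derivs (cc_ball \<Omega> L X d x (\<xi>B p *\<^sub>R \<delta>)) L ?Y (eB p x \<delta> j) (DB p) m \<and>
                  (\<Sum>\<beta>\<in>{\<beta>. set \<beta> \<subseteq> L \<and> length \<beta> \<le> m}.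
                      (SUP y\<in>cc_ball \<Omega> L X d x (\<xi>B p *\<^sub>R \<delta>). ereal \<bar>DB p \<beta> y\<bar>)) \<le> ereal (CBB p)" by blast
      have fb0: "fb ?B L ?Y (D0 l) (Suc m) (C0 l)" if "l \<in> L" for l
        using fb_subset[OF Bsub0[OF nn] supsum_fb[OF finL]] D0 that by blast
      have fb1: "fb ?B L ?Y (D1 l) (Suc m) (C1 l)" if "l \<in> L" for l
        using fb_subset[OF Bsub1[OF nn] supsum_fb[OF finL]] D1 that by blast
      have fbB: "fb ?B L ?Y (DB p) m (CBB p)" if "p \<in> L \<times> L" for p
        using fb_subset[OF BsubB[OF nn that] supsum_fb[OF finL]] DB that by blast
      have base0: "D0 l [] y = c0 x \<delta> l y" if "l \<in> L" "y \<in> ?B" for l y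
        using D0 that Bsub0[OF nn] unfolding vf_derivs_def by blast
      have base1: "D1 l [] y = c1 x \<delta> l y" if "l \<in> L" "y \<in> ?B" for l y
        using D1 that Bsub1[OF nn] unfolding vf_derivs_def by blast
      have baseB: "DB p [] y = eB p x \<delta> j y" if "p \<in> L \<times> L" "y \<in> ?B" for p y
        using DB that BsubB[OF nn] unfolding vf_derivs_def by blast
      have uniq0: "D0 k [l] y = Dc x \<delta> k [l] y" if "k \<in> L" "l \<in> L" "y \<in> ?B" for k l y
      proof -
        have f1: "fam ?B L ?Y (D0 k) (Suc m)" using fb0[OF that(1)] unfolding fb_def by blast
        have "vf_derivs (cc_ball \<Omega> L X d x (\<xi>0 *\<^sub>R \<delta>)) L ?Y (c0 x \<delta> k) (Dc x \<delta> k) 1"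
          using Dc x UU0 box that(1) by blast
        then have f2: "fam ?B L ?Y (Dc x \<delta> k) 1" and b2: "\<forall>y\<in>?B. Dc x \<delta> k [] y = c0 x \<delta> k y"
          using fam_subset[OF Bsub0[OF nn]] Bsub0[OF nn] unfolding vf_derivs_fam by blast+
        have "\<forall>y\<in>?B. D0 k [] y = Dc x \<delta> k [] y" using b2 base0 that(1) by simp
        then show ?thesis using fam_unique[OF curB[OF nn] f1 f2, of "[l]"] that by simp
      qed
      have uniq1: "D1 k [l] y = Dc' x \<delta> k [l] y" if "k \<in> L" "l \<in> L" "y \<in> ?B" for k l y
      proof -
        have f1: "fam ?B L ?Y (D1 k) (Suc m)" using fb1[OF that(1)] unfolding fb_def by blast
        have "vf_derivs (cc_ball \<Omega> L X d x (\<xi>1 *\<^sub>R \<delta>)) L ?Y (c1 x \<delta> k) (Dc' x \<delta> k) 1"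
          using Dc' x UU1 box that(1) by blast
        then have f2: "fam ?B L ?Y (Dc' x \<delta> k) 1" and b2: "\<forall>y\<in>?B. Dc' x \<delta> k [] y = c1 x \<delta> k y"
          using fam_subset[OF Bsub1[OF nn]] Bsub1[OF nn] unfolding vf_derivs_fam by blast+
        have "\<forall>y\<in>?B. D1 k [] y = Dc' x \<delta> k [] y" using b2 base1 that(1) by simp
        then show ?thesis using fam_unique[OF curB[OF nn] f1 f2, of "[l]"] that by simp
      qed
      have a1: "fb ?B L ?Y (\<lambda>\<beta> y. \<Sum>l\<in>L. mprod (D0 l) (\<lambda>\<beta>. D1 j (\<beta> @ [l])) \<beta> y) m (\<Sum>l\<in>L. 2 ^ m * (C0 l * C1 j))"
      proof (rule fb_sum[OF finL], intro ballI)
        fix l assume l: "l \<in> L"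
        show "fb ?B L ?Y (mprod (D0 l) (\<lambda>\<beta>. D1 j (\<beta> @ [l]))) m (2 ^ m * (C0 l * C1 j))"
          by (rule fb_mprod[OF fb_level_mono[OF _ fb0[OF l]] fb_shift[OF l fb1[OF j]]]) simp
      qed
      have a2: "fb ?B L ?Y (\<lambda>\<beta> y. - (\<Sum>k\<in>L. mprod (D1 k) (\<lambda>\<beta>. D0 j (\<beta> @ [k])) \<beta> y)) m (\<Sum>k\<in>L. 2 ^ m * (C1 k * C0 j))"
      proof (rule fb_minus, rule fb_sum[OF finL], intro ballI)
        fix k assume k: "k \<in> L"
        show "fb ?B L ?Y (mprod (D1 k) (\<lambda>\<beta>. D0 j (\<beta> @ [k]))) m (2 ^ m * (C1 k * C0 j))"
          by (rule fb_mprod[OF fb_level_mono[OF _ fb1[OF k]] fb_shift[OF k fb0[OF j]]]) simp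
      qed
      have a3: "fb ?B L ?Y (\<lambda>\<beta> y. \<Sum>l\<in>L. \<Sum>k\<in>L. mprod (D0 l) (mprod (D1 k) (DB (l, k))) \<beta> y) m
          (\<Sum>l\<in>L. \<Sum>k\<in>L. 2 ^ m * (C0 l * (2 ^ m * (C1 k * CBB (l, k)))))"
      proof (rule fb_sum[OF finL], intro ballI)
        fix l assume l: "l \<in> L"
        show "fb ?B L ?Y (\<lambda>\<beta> y. \<Sum>k\<in>L. mprod (D0 l) (mprod (D1 k) (DB (l, k))) \<beta> y) m
          (\<Sum>k\<in>L. 2 ^ m * (C0 l * (2 ^ m * (C1 k * CBB (l, k)))))"
        proof (rule fb_sum[OF finL], intro ballI)
          fix k assume k: "k \<in> L"
          have lk: "(l, k) \<in> L \<times> L" using l k by simp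
          show "fb ?B L ?Y (mprod (D0 l) (mprod (D1 k) (DB (l, k)))) m (2 ^ m * (C0 l * (2 ^ m * (C1 k * CBB (l, k)))))"
            by (rule fb_mprod[OF fb_level_mono[OF _ fb0[OF l]] fb_mprod[OF fb_level_mono[OF _ fb1[OF k]] fbB[OF lk]]]) simp_all
        qed
      qed
      define Dn where "Dn = (\<lambda>\<beta> y. (\<Sum>l\<in>L. mprod (D0 l) (\<lambda>\<beta>. D1 j (\<beta> @ [l])) \<beta> y) +
          - (\<Sum>k\<in>L. mprod (D1 k) (\<lambda>\<beta>. D0 j (\<beta> @ [k])) \<beta> y) +
          (\<Sum>l\<in>L. \<Sum>k\<in>L. mprod (D0 l) (mprod (D1 k) (DB (l, k))) \<beta> y))"
      have fbn: "fb ?B L ?Y Dn m K"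
        unfolding Dn_def K_def by (rule fb_add[OF fb_add[OF a1 a2] a3])
      have basen: "\<forall>y\<in>?B. Dn [] y = cn x \<delta> j y"
      proof
        fix y assume y: "y \<in> ?B"
        have e1: "(\<Sum>l\<in>L. mprod (D0 l) (\<lambda>\<beta>. D1 j (\<beta> @ [l])) [] y) = (\<Sum>l\<in>L. c0 x \<delta> l y * Dc' x \<delta> j [l] y)"
          by (rule sum.cong[OF refl]) (simp add: mprod_Nil base0 uniq1 j y)
        have e2: "(\<Sum>k\<in>L. mprod (D1 k) (\<lambda>\<beta>. D0 j (\<beta> @ [k])) [] y) = (\<Sum>k\<in>L. c1 x \<delta> k y * Dc x \<delta> j [k] y)"
          by (rule sum.cong[OF refl]) (simp add: mprod_Nil base1 uniq0 j y)
        have e3: "(\<Sum>l\<in>L. \<Sum>k\<in>L. mprod (D0 l) (mprod (D1 k) (DB (l, k))) [] y) =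
            (\<Sum>l\<in>L. \<Sum>k\<in>L. c0 x \<delta> l y * c1 x \<delta> k y * eB (l, k) x \<delta> j y)"
          by (intro sum.cong refl) (simp add: mprod_Nil base0 base1 baseB y mult.assoc)
        show "Dn [] y = cn x \<delta> j y" unfolding Dn_def cn_def e1 e2 e3 by simp
      qed
      have "vf_derivs ?B L ?Y (cn x \<delta> j) Dn m"
        unfolding vf_derivs_fam using basen fbn unfolding fb_def by blast
      moreover have "(\<Sum>\<beta>\<in>{\<beta>. set \<beta> \<subseteq> L \<and> length \<beta> \<le> m}. (SUP y\<in>?B. ereal \<bar>Dn \<beta> y\<bar>))
          \<le> ereal (real (card {\<beta>. set \<beta> \<subseteq> L \<and> length \<beta> \<le> m}) * K)"
        by (rule fb_supsum[OF fbn])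
      ultimately show "\<exists>D. vf_derivs ?B L ?Y (cn x \<delta> j) D m \<and>
          (\<Sum>\<beta>\<in>{\<beta>. set \<beta> \<subseteq> L \<and> length \<beta> \<le> m}. (SUP y\<in>?B. ereal \<bar>D \<beta> y\<bar>))
          \<le> ereal (real (card {\<beta>. set \<beta> \<subseteq> L \<and> length \<beta> \<le> m}) * K)" by blast
    qed
  qed
  have "ctrl \<Omega> L X d (lie_bracket (X 0) (X 1)) (d 0 + d 1) U \<xi> cn"
    unfolding ctrl_def
  proof (intro conjI)
    show "\<forall>x\<in>U. \<forall>\<delta>. (\<forall>\<mu>. 0 \<le> \<delta> $ \<mu> \<and> \<delta> $ \<mu> \<le> 1) \<longrightarrow>
        (\<forall>y\<in>cc_ball \<Omega> L X d x (\<xi> *\<^sub>R \<delta>).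
           dpow \<delta> (d 0 + d 1) *\<^sub>R lie_bracket (X 0) (X 1) y = (\<Sum>l\<in>L. (cn x \<delta> l y * dpow \<delta> (d l)) *\<^sub>R X l y))"
      using ident by blast
    show "\<forall>m. \<forall>l\<in>L. \<exists>C::real. \<forall>x\<in>U. \<forall>\<delta>. (\<forall>\<mu>. 0 \<le> \<delta> $ \<mu> \<and> \<delta> $ \<mu> \<le> 1) \<longrightarrow>
             (\<exists>D. vf_derivs (cc_ball \<Omega> L X d x (\<xi> *\<^sub>R \<delta>)) L (\<lambda>j y. dpow \<delta> (d j) *\<^sub>R X j y) (cn x \<delta> l) D m \<and>
                  (\<Sum>\<beta>\<in>{\<beta>. set \<beta> \<subseteq> L \<and> length \<beta> \<le> m}.
                      (SUP y\<in>cc_ball \<Omega> L X d x (\<xi> *\<^sub>R \<delta>). ereal \<bar>D \<beta> y\<bar>)) \<le> ereal C)"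
      using bounds by blast
  qed (use Uopen U0in UOm \<xi>pos condU in auto)
  then show ?thesis unfolding L_def controls_ctrl by blast
qed


end
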